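(* For every $n\ge1$, $$\mathrm{SH}_n=\sum_{\substack{\lambda\vdash n\\ \text{all parts odd}}}\frac{2^{\ell}}{\ell!}\cdot\frac{\ell!}{m_1!\,m_3!\,m_5!\cdots}\cdot\prod_{j=0}^{\ell-2}(n+\ell-1-2j)\;V_\lambda,$$ where $\ell=\ell(\lambda)$ is the number of parts of $\lambda$, $m_i$ is the number of parts equal to $i$, the product $\prod_{j=0}^{\ell-2}(n+\ell-1-2j)=(n+\ell-1)(n+\ell-3)\cdots(n-\ell+3)$ is empty (equal to $1$) when $\ell=1$, and $V_\lambda=P_{\lambda_1}P_{\lambda_2}\cdots$.
   Context: Work in the ring $\Lambda_{\mathbb Q}$ of symmetric functions with rational coefficients in variables $x=(x_1,x_2,\dots)$; $p_k$ denotes the power sum. For $f\in\Lambda_{\mathbb Q}$, its shiftification $f(x/x)$ is obtained by writing $f$ as a polynomial in the power sums and substituting $p_{2i+1}\mapsto 2p_{2i+1}$ and $p_{2i}\mapsto 0$ for all $i\ge1$. A parking function of length $n$ is a sequence $(a_1,\dots,a_n)$ of positive integers whose weakly increasing rearrangement $b_1\le\cdots\le b_n$ satisfies $b_i\le i$ for all $i$. The symmetric group $S_n$ acts on the set of parking functions of length $n$ by permuting coordinates; $\mathrm{PF}_n$ denotes the Frobenius characteristic of this permutation representation ($\mathrm{PF}_0=1$). Define $\mathrm{SH}_n(x)=\mathrm{PF}_n(x/x)$. The one-row Schur $P$-functions $P_n$ are defined by $1+2\sum_{n\ge1}P_n(x)t^n=\prod_i\frac{1+x_it}{1-x_it}$.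 For any partition $\lambda$, $V_\lambda=P_{\lambda_1}P_{\lambda_2}\cdots$. (The $P_{2i+1}$, $i\ge0$, are algebraically independent and generate $\Gamma=\mathbb Q[p_1,p_3,p_5,\dots]$, so this expansion is unique.) *)

theory Defs
  imports Complex_Main "HOL-Library.Multiset" "HOL-Combinatorics.Permutations"
    "HOL-Combinatorics.Orbits" "HOL-Computational_Algebra.Formal_Power_Series"
begin

text \<open>Symmetric functions are evaluated at finitely many real variables
  x 0, ..., x (N-1); an identity in the ring of symmetric functions holds iff it
  holds for all such evaluations (all N, all real x).\<close>

definition power_sum :: "nat \<Rightarrow> nat \<Rightarrow> (nat \<Rightarrow> real) \<Rightarrow> real" where
  "power_sum N k x = (\<Sum>i<N. x i ^ k)"

definition parking_functions :: "nat \<Rightarrow> nat list set" where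
  "parking_functions n = {a. length a = n \<and> (\<forall>i<n. a ! i \<ge> 1) \<and>
      (\<forall>i<n. sort a ! i \<le> i + 1)}"

definition fixed_pfs :: "nat \<Rightarrow> (nat \<Rightarrow> nat) \<Rightarrow> nat list set" where
  "fixed_pfs n \<sigma> = {a \<in> parking_functions n. \<forall>i<n. a ! (\<sigma> i) = a ! i}"

definition cycles_of :: "nat \<Rightarrow> (nat \<Rightarrow> nat) \<Rightarrow> nat set set" where
  "cycles_of n \<sigma> = (\<lambda>i. orbit \<sigma> i) ` {..<n}"

text \<open>Frobenius characteristic of the permutation representation on parking
  functions: (1/n!) sum over sigma of (number of fixed points) times p_(cycle type).
  Shiftification replaces p_k by 2 p_k (k odd) and 0 (k even).\<close>
definition shift_ps :: "nat \<Rightarrow> nat \<Rightarrow> (nat \<Rightarrow> real) \<Rightarrow> real" where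
  "shift_ps N k x = (if odd k then 2 * power_sum N k x else 0)"

definition PF :: "nat \<Rightarrow> nat \<Rightarrow> (nat \<Rightarrow> real) \<Rightarrow> real" where
  "PF n N x = (1 / fact n) * (\<Sum>\<sigma> | \<sigma> permutes {..<n}.
      real (card (fixed_pfs n \<sigma>)) * (\<Prod>c\<in>cycles_of n \<sigma>. power_sum N (card c) x))"

definition SH :: "nat \<Rightarrow> nat \<Rightarrow> (nat \<Rightarrow> real) \<Rightarrow> real" where
  "SH n N x = (1 / fact n) * (\<Sum>\<sigma> | \<sigma> permutes {..<n}.
      real (card (fixed_pfs n \<sigma>)) * (\<Prod>c\<in>cycles_of n \<sigma>. shift_ps N (card c) x))"

text \<open>One-row Schur P-functions: 1 + 2 sum P_n t^n = prod_i (1 + x_i t)/(1 - x_i t).\<close>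
definition schurP_gf :: "nat \<Rightarrow> (nat \<Rightarrow> real) \<Rightarrow> real fps" where
  "schurP_gf N x = (\<Prod>i<N. (1 + fps_const (x i) * fps_X) * inverse (1 - fps_const (x i) * fps_X))"

definition schurP :: "nat \<Rightarrow> nat \<Rightarrow> (nat \<Rightarrow> real) \<Rightarrow> real" where
  "schurP n N x = fps_nth (schurP_gf N x) n / 2"

definition V :: "nat multiset \<Rightarrow> nat \<Rightarrow> (nat \<Rightarrow> real) \<Rightarrow> real" where
  "V mu N x = (\<Prod>k\<in>#mu. schurP k N x)"

definition odd_partitions :: "nat \<Rightarrow> nat multiset set" where
  "odd_partitions n = {mu. (\<forall>k\<in>#mu. odd k) \<and> sum_mset mu = n}"

end

theory Submission
  imports Defs "HOL-Combinatorics.Multiset_Permutations"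
begin

unbundle fps_syntax

definition Fp :: "('a set \<Rightarrow> real) \<Rightarrow> 'a set \<Rightarrow> real" where
  "Fp g A = (\<Sum>\<sigma> | \<sigma> permutes A. \<Prod>c \<in> orbit \<sigma> ` A. g c)"

definition cycperms :: "'a set \<Rightarrow> ('a \<Rightarrow> 'a) set" where
  "cycperms C = {\<tau>. \<tau> permutes C \<and> cyclic_on \<tau> C}"

lemma perm_restrict_cyclic_permutes:
  assumes "\<sigma> permutes A" "cyclic_on \<sigma> C" "C \<subseteq> A"
  shows "perm_restrict \<sigma> C permutes C"
proof -
  have inC: "\<sigma> x \<in> C \<longleftrightarrow> x \<in> C" for x
    using assms cyclic_on_f_in cyclic_on_inI by metis
  have inj: "\<sigma> x = \<sigma> y \<Longrightarrow> x = y" for x y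
    using assms(1) by (metis permutes_inj injD)
  have surj: "\<exists>x. \<sigma> x = y" for y
    using assms(1) by (metis permutes_surj surjD)
  show ?thesis
    unfolding permutes_def perm_restrict_def
  proof (intro conjI allI impI)
    fix y
    show "\<exists>!x. (if x \<in> C then \<sigma> x else x) = y"
    proof (cases "y \<in> C")
      case True
      then obtain x where "\<sigma> x = y" using surj by blast
      then show ?thesis using True inC inj by (metis)
    next
      case False
      then show ?thesis using inC by (metis)
    qed
  qed auto
qed

lemma glue_orbits:
  assumes tau: "\<tau> permutes C" "cyclic_on \<tau> C" and rho: "\<rho> permutes B" and disj: "C \<inter> B = {}"
  defines "\<psi> \<equiv> (\<lambda>x. if x \<in> C then \<tau> x else \<rho> x)"
  shows "x \<in> C \<Longrightarrow> orbit \<psi> x = C" and "x \<in> B \<Longrightarrow> orbit \<psi> x = orbit \<rho> x"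
proof -
  assume x: "x \<in> C"
  have "orbit \<psi> x = orbit \<tau> x"
    by (rule orbit_cong0[OF x]) (auto simp: \<psi>_def permutes_in_image[OF tau(1)])
  also have "\<dots> = C" using orbit_cyclic_eq3[OF tau(2) x] .
  finally show "orbit \<psi> x = C" .
next
  assume x: "x \<in> B"
  show "orbit \<psi> x = orbit \<rho> x"
    by (rule orbit_cong0[OF x]) (use disj in \<open>auto simp: \<psi>_def permutes_in_image[OF rho]\<close>)
qed

lemma glue_permutes:
  assumes tau: "\<tau> permutes C" and rho: "\<rho> permutes A - C" and CA: "C \<subseteq> A"
  shows "(\<lambda>x. if x \<in> C then \<tau> x else \<rho> x) permutes A"
proof -
  have eq: "(\<lambda>x. if x \<in> C then \<tau> x else \<rho> x) = \<tau> \<circ> \<rho>"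
  proof
    fix x
    show "(if x \<in> C then \<tau> x else \<rho> x) = (\<tau> \<circ> \<rho>) x"
    proof (cases "x \<in> C")
      case True
      then have "\<rho> x = x" using rho by (simp add: permutes_not_in)
      then show ?thesis using True by simp
    next
      case False
      have "\<rho> x \<notin> C"
      proof (cases "x \<in> A - C")
        case True then show ?thesis using permutes_in_image[OF rho] by auto
      next
        case F2: False then show ?thesis using rho False by (simp add: permutes_not_in)
      qed
      then show ?thesis using False tau by (simp add: permutes_not_in)
    qed
  qed
  show ?thesis unfolding eq
    by (rule permutes_compose[OF permutes_subset[OF rho] permutes_subset[OF tau CA]]) auto
qed

lemma finite_cycperms: "finite C \<Longrightarrow> finite (cycperms C)"
  unfolding cycperms_def by (rule finite_subset[OF _ finite_permutations]) auto

lemma decomp: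
  assumes A: "finite A" "a \<in> A"
  shows "Fp g A = (\<Sum>C \<in> {C. C \<subseteq> A \<and> a \<in> C}. real (card (cycperms C)) * g C * Fp g (A - C))"
proof -
  define \<Psi> where "\<Psi> = (\<lambda>(C::'a set, \<tau>::'a\<Rightarrow>'a, \<rho>::'a\<Rightarrow>'a). (\<lambda>x. if x \<in> C then \<tau> x else \<rho> x))"
  define I where "I = Sigma {C. C \<subseteq> A \<and> a \<in> C} (\<lambda>C. cycperms C \<times> {\<rho>. \<rho> permutes A - C})"
  have finS: "finite {C. C \<subseteq> A \<and> a \<in> C}" using A by auto
  have finB: "finite (cycperms C \<times> {\<rho>. \<rho> permutes A - C})" if "C \<in> {C. C \<subseteq> A \<and> a \<in> C}" for C
    using that A by (intro finite_cartesian_product finite_cycperms finite_permutations) (auto intro: finite_subset)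
  have val: "(\<Prod>c \<in> orbit (\<Psi> (C,\<tau>,\<rho>)) ` A. g c) = g C * (\<Prod>c \<in> orbit \<rho> ` (A - C). g c)"
    if p: "(C,\<tau>,\<rho>) \<in> I" for C \<tau> \<rho>
  proof -
    from p have CA: "C \<subseteq> A" "a \<in> C" and tau: "\<tau> permutes C" "cyclic_on \<tau> C" and rho: "\<rho> permutes A - C"
      by (auto simp: I_def cycperms_def)
    have o1: "x \<in> C \<Longrightarrow> orbit (\<Psi> (C,\<tau>,\<rho>)) x = C" for x
      using glue_orbits(1)[OF tau rho, of x] by (auto simp: \<Psi>_def)
    have o2: "x \<in> A - C \<Longrightarrow> orbit (\<Psi> (C,\<tau>,\<rho>)) x = orbit \<rho> x" for x
      using glue_orbits(2)[OF tau rho, of x] by (auto simp: \<Psi>_def)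
    have AU: "A = C \<union> (A - C)" using CA by auto
    have img: "orbit (\<Psi> (C,\<tau>,\<rho>)) ` A = insert C (orbit \<rho> ` (A - C))"
    proof -
      have "orbit (\<Psi> (C,\<tau>,\<rho>)) ` A = orbit (\<Psi> (C,\<tau>,\<rho>)) ` C \<union> orbit (\<Psi> (C,\<tau>,\<rho>)) ` (A - C)"
        using AU by (metis image_Un)
      also have "orbit (\<Psi> (C,\<tau>,\<rho>)) ` C = {C}" using o1 CA(2) by auto
      also have "orbit (\<Psi> (C,\<tau>,\<rho>)) ` (A - C) = orbit \<rho> ` (A - C)" using o2 by auto
      finally show ?thesis by simp
    qed
    have notin: "C \<notin> orbit \<rho> ` (A - C)"
    proof
      assume "C \<in> orbit \<rho> ` (A - C)"
      then obtain y where y: "y \<in> A - C" "C = orbit \<rho> y" by auto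
      then have "C \<subseteq> A - C" using permutes_orbit_subset[OF rho y(1)] by simp
      then show False using CA(2) by auto
    qed
    have fin: "finite (orbit \<rho> ` (A - C))" using A by simp
    show ?thesis unfolding img using prod.insert[OF fin notin] by simp
  qed
  have bij: "bij_betw \<Psi> I {\<sigma>. \<sigma> permutes A}"
    unfolding bij_betw_def
  proof (intro conjI)
    show "inj_on \<Psi> I"
    proof (rule inj_onI)
      fix p q assume p: "p \<in> I" and q: "q \<in> I" and eq: "\<Psi> p = \<Psi> q"
      obtain C \<tau> \<rho> where pd: "p = (C,\<tau>,\<rho>)" by (cases p) auto
      obtain C' \<tau>' \<rho>' where qd: "q = (C',\<tau>',\<rho>')" by (cases q) auto
      from p pd have CA: "C \<subseteq> A" "a \<in> C" and tau: "\<tau> permutes C" "cyclic_on \<tau> C" and rho: "\<rho> permutes A - C"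
        by (auto simp: I_def cycperms_def)
      from q qd have CA': "C' \<subseteq> A" "a \<in> C'" and tau': "\<tau>' permutes C'" "cyclic_on \<tau>' C'" and rho': "\<rho>' permutes A - C'"
        by (auto simp: I_def cycperms_def)
      have "C = orbit (\<Psi> p) a" using glue_orbits(1)[OF tau rho, of a] CA by (auto simp: \<Psi>_def pd)
      also have "\<dots> = orbit (\<Psi> q) a" using eq by simp
      also have "\<dots> = C'" using glue_orbits(1)[OF tau' rho', of a] CA' by (auto simp: \<Psi>_def qd)
      finally have CC: "C = C'" .
      have e: "(if x \<in> C then \<tau> x else \<rho> x) = (if x \<in> C then \<tau>' x else \<rho>' x)" for x
        using eq CC by (auto simp: pd qd \<Psi>_def fun_eq_iff)
      have "\<tau> = \<tau>'"
      proof
        fix x show "\<tau> x = \<tau>' x"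
          using e[of x] tau tau' CC by (cases "x \<in> C") (auto simp: permutes_not_in)
      qed
      moreover have "\<rho> = \<rho>'"
      proof
        fix x show "\<rho> x = \<rho>' x"
          using e[of x] rho rho' CC by (cases "x \<in> C") (auto simp: permutes_not_in)
      qed
      ultimately show "p = q" using CC pd qd by simp
    qed
  next
    show "\<Psi> ` I = {\<sigma>. \<sigma> permutes A}"
    proof (intro equalityI subsetI)
      fix s assume "s \<in> \<Psi> ` I"
      then obtain C \<tau> \<rho> where p: "(C,\<tau>,\<rho>) \<in> I" and s: "s = \<Psi> (C,\<tau>,\<rho>)" by auto
      from p have CA: "C \<subseteq> A" and tau: "\<tau> permutes C" and rho: "\<rho> permutes A - C"
        by (auto simp: I_def cycperms_def)
      show "s \<in> {\<sigma>. \<sigma> permutes A}" using glue_permutes[OF tau rho CA] s by (simp add: \<Psi>_def)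
    next
      fix s assume "s \<in> {\<sigma>. \<sigma> permutes A}"
      then have s: "s permutes A" by simp
      define C where "C = orbit s a"
      have CA: "C \<subseteq> A" unfolding C_def using permutes_orbit_subset[OF s A(2)] .
      have aC: "a \<in> C" unfolding C_def
        by (rule permutation_self_in_orbit) (use s A in \<open>auto simp: permutation_permutes\<close>)
      have cyc: "cyclic_on s C" unfolding C_def using cyclic_on_orbit[OF s A(1)] .
      have tau: "perm_restrict s C permutes C" by (rule perm_restrict_cyclic_permutes[OF s cyc CA])
      have tauc: "cyclic_on (perm_restrict s C) C" using cyc by (simp add: cyclic_on_perm_restrict)
      have rho: "perm_restrict s (A - C) permutes (A - C)" by (rule perm_restrict_diff_cyclic[OF s cyc])
      have mem: "(C, perm_restrict s C, perm_restrict s (A - C)) \<in> I"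
        using CA aC tau tauc rho by (auto simp: I_def cycperms_def)
      have "\<Psi> (C, perm_restrict s C, perm_restrict s (A - C)) = s"
      proof
        fix x show "\<Psi> (C, perm_restrict s C, perm_restrict s (A - C)) x = s x"
          using s by (auto simp: \<Psi>_def perm_restrict_def permutes_not_in)
      qed
      then show "s \<in> \<Psi> ` I" using mem by (metis image_eqI)
    qed
  qed
  have "Fp g A = (\<Sum>p \<in> I. \<Prod>c \<in> orbit (\<Psi> p) ` A. g c)"
    unfolding Fp_def using sum.reindex_bij_betw[OF bij, of "\<lambda>\<sigma>. \<Prod>c \<in> orbit \<sigma> ` A. g c"] by simp
  also have "\<dots> = (\<Sum>p \<in> I. g (fst p) * (\<Prod>c \<in> orbit (snd (snd p)) ` (A - fst p). g c))"
    by (rule sum.cong[OF refl]) (use val in auto)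
  also have "\<dots> = (\<Sum>C \<in> {C. C \<subseteq> A \<and> a \<in> C}. \<Sum>q \<in> cycperms C \<times> {\<rho>. \<rho> permutes A - C}.
        g C * (\<Prod>c \<in> orbit (snd q) ` (A - C). g c))"
    unfolding I_def by (subst sum.Sigma[OF finS ballI[OF finB]]) (auto simp: case_prod_beta)
  also have "\<dots> = (\<Sum>C \<in> {C. C \<subseteq> A \<and> a \<in> C}. real (card (cycperms C)) * g C * Fp g (A - C))"
  proof (rule sum.cong[OF refl])
    fix C assume "C \<in> {C. C \<subseteq> A \<and> a \<in> C}"
    have "(\<Sum>q \<in> cycperms C \<times> {\<rho>. \<rho> permutes A - C}. g C * (\<Prod>c \<in> orbit (snd q) ` (A - C). g c))
        = (\<Sum>\<tau> \<in> cycperms C. \<Sum>\<rho> \<in> {\<rho>. \<rho> permutes A - C}. g C * (\<Prod>c \<in> orbit \<rho> ` (A - C). g c))"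
      by (subst sum.cartesian_product) (simp add: case_prod_beta)
    also have "\<dots> = real (card (cycperms C)) * g C * Fp g (A - C)"
      by (simp add: Fp_def sum_distrib_left mult.assoc)
    finally show "(\<Sum>q \<in> cycperms C \<times> {\<rho>. \<rho> permutes A - C}. g C * (\<Prod>c \<in> orbit (snd q) ` (A - C). g c))
        = real (card (cycperms C)) * g C * Fp g (A - C)" .
  qed
  finally show ?thesis .
qed

lemma sum_subsets_containing:
  fixes h :: "nat \<Rightarrow> real"
  assumes A: "finite A" "a \<in> A"
  shows "(\<Sum>C\<in>{C. C \<subseteq> A \<and> a \<in> C}. h (card C)) = (\<Sum>k\<in>{1..card A}. real ((card A - 1) choose (k - 1)) * h k)"
proof -
  have finS: "finite {C. C \<subseteq> A \<and> a \<in> C}" using A by auto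
  have img: "card ` {C. C \<subseteq> A \<and> a \<in> C} \<subseteq> {1..card A}"
  proof
    fix k assume "k \<in> card ` {C. C \<subseteq> A \<and> a \<in> C}"
    then obtain C where C: "C \<subseteq> A" "a \<in> C" "k = card C" by auto
    have "finite C" using C A finite_subset by blast
    then have "card C \<ge> 1" using C by (metis One_nat_def Suc_leI card_gt_0_iff empty_iff)
    moreover have "card C \<le> card A" using C A card_mono by blast
    ultimately show "k \<in> {1..card A}" using C by auto
  qed
  have cnt: "card {C \<in> {C. C \<subseteq> A \<and> a \<in> C}. card C = k} = (card A - 1) choose (k - 1)"
    if k: "k \<in> {1..card A}" for k
  proof -
    have eq: "{C \<in> {C. C \<subseteq> A \<and> a \<in> C}. card C = k} = insert a ` {E. E \<subseteq> A - {a} \<and> card E = k - 1}"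
    proof (intro equalityI subsetI)
      fix C assume "C \<in> {C \<in> {C. C \<subseteq> A \<and> a \<in> C}. card C = k}"
      then have C: "C \<subseteq> A" "a \<in> C" "card C = k" by auto
      have "finite C" using C A finite_subset by blast
      then have "card (C - {a}) = k - 1" using C by simp
      moreover have "C = insert a (C - {a})" using C by auto
      ultimately show "C \<in> insert a ` {E. E \<subseteq> A - {a} \<and> card E = k - 1}" using C by blast
    next
      fix C assume "C \<in> insert a ` {E. E \<subseteq> A - {a} \<and> card E = k - 1}"
      then obtain E where E: "E \<subseteq> A - {a}" "card E = k - 1" "C = insert a E" by auto
      have "finite E" using E A finite_subset by (metis finite_Diff)
      then have "card C = k" using E k by (auto simp: card_insert_if)
      then show "C \<in> {C \<in> {C. C \<subseteq> A \<and> a \<in> C}. card C = k}" using E A by auto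
    qed
    have inj: "inj_on (insert a) {E. E \<subseteq> A - {a} \<and> card E = k - 1}"
      by (rule inj_onI) (metis Diff_insert_absorb insert_Diff mem_Collect_eq subset_Diff_insert)
    have "card {C \<in> {C. C \<subseteq> A \<and> a \<in> C}. card C = k} = card {E. E \<subseteq> A - {a} \<and> card E = k - 1}"
      unfolding eq by (rule card_image[OF inj])
    also have "\<dots> = card (A - {a}) choose (k - 1)" using A by (intro n_subsets) auto
    also have "card (A - {a}) = card A - 1" using A by simp
    finally show ?thesis .
  qed
  have "(\<Sum>C\<in>{C. C \<subseteq> A \<and> a \<in> C}. h (card C)) =
      (\<Sum>k\<in>{1..card A}. real (card {C \<in> {C. C \<subseteq> A \<and> a \<in> C}. card C = k}) * h k)"
    by (rule sum_fun_comp[OF finS _ img]) simp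
  also have "\<dots> = (\<Sum>k\<in>{1..card A}. real ((card A - 1) choose (k - 1)) * h k)"
    by (rule sum.cong[OF refl]) (simp only: cnt)
  finally show ?thesis .
qed

lemma binom_fact_real:
  assumes "1 \<le> k" "k \<le> m"
  shows "real ((m - 1) choose (k - 1)) * fact (k - 1) * fact (m - k) = fact (m - 1)"
proof -
  have "fact (k - 1) * fact ((m - 1) - (k - 1)) * ((m - 1) choose (k - 1)) = (fact (m - 1) :: nat)"
    using assms by (intro binomial_fact_lemma) auto
  moreover have "(m - 1) - (k - 1) = m - k" using assms by auto
  ultimately have "fact (k - 1) * fact (m - k) * ((m - 1) choose (k - 1)) = (fact (m - 1) :: nat)" by simp
  then have "real (fact (k - 1) * fact (m - k) * ((m - 1) choose (k - 1))) = real (fact (m - 1))" by simp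
  then show ?thesis by (simp add: of_nat_mult mult_ac)
qed

lemma Fp_empty: "Fp g {} = 1"
  by (simp add: Fp_def permutes_empty)

lemma Fp_one: "finite A \<Longrightarrow> Fp (\<lambda>_. 1) A = fact (card A)"
  by (simp add: Fp_def card_permutations)

lemma card_cycperms:
  assumes "finite C" "C \<noteq> {}"
  shows "real (card (cycperms C)) = fact (card C - 1)"
  using assms
proof (induction "card C" arbitrary: C rule: less_induct)
  case less
  obtain a where a: "a \<in> C" using less.prems by auto
  define m where "m = card C"
  have m1: "m \<ge> 1" using less.prems m_def by (metis One_nat_def Suc_leI card_gt_0_iff)
  define S where "S = {D. D \<subseteq> C \<and> a \<in> D}"
  have finS: "finite S" using less.prems by (auto simp: S_def)
  have CS: "C \<in> S" using a by (auto simp: S_def)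
  have IH: "real (card (cycperms D)) = fact (card D - 1)" if "D \<in> S - {C}" for D
  proof -
    from that have D: "D \<subseteq> C" "a \<in> D" "D \<noteq> C" by (auto simp: S_def)
    have "finite D" using D less.prems finite_subset by blast
    moreover have "card D < card C" using D less.prems by (meson psubsetI psubset_card_mono)
    ultimately show ?thesis using less.hyps D by blast
  qed
  have "fact m = Fp (\<lambda>_. 1) C" using Fp_one[OF less.prems(1)] m_def by simp
  also have "\<dots> = (\<Sum>D\<in>S. real (card (cycperms D)) * fact (m - card D))"
    unfolding decomp[OF less.prems(1) a] S_def
  proof (rule sum.cong[OF refl])
    fix D assume "D \<in> {D. D \<subseteq> C \<and> a \<in> D}"
    then have D: "D \<subseteq> C" by auto
    have fD: "finite D" using D less.prems(1) by (rule finite_subset)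
    have "Fp (\<lambda>_. 1) (C - D) = fact (card (C - D))" using less.prems(1) by (simp add: Fp_one)
    also have "card (C - D) = m - card D" using D fD m_def by (simp add: card_Diff_subset)
    finally show "real (card (cycperms D)) * 1 * Fp (\<lambda>_. 1) (C - D) = real (card (cycperms D)) * fact (m - card D)"
      by simp
  qed
  also have "\<dots> = real (card (cycperms C)) + (\<Sum>D\<in>S - {C}. real (card (cycperms D)) * fact (m - card D))"
    using finS CS m_def by (simp add: sum.remove)
  also have "(\<Sum>D\<in>S - {C}. real (card (cycperms D)) * fact (m - card D)) =
      (\<Sum>D\<in>S - {C}. fact (card D - 1) * fact (m - card D))"
    by (rule sum.cong[OF refl]) (simp add: IH)
  also have "\<dots> = (\<Sum>D\<in>S. fact (card D - 1) * fact (m - card D)) - fact (m - 1)"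
    using finS CS m_def by (simp add: sum.remove)
  also have "(\<Sum>D\<in>S. fact (card D - 1) * fact (m - card D)) =
      (\<Sum>k\<in>{1..m}. real ((m - 1) choose (k - 1)) * (fact (k - 1) * fact (m - k)))"
    unfolding S_def m_def using sum_subsets_containing[OF less.prems(1) a, of "\<lambda>k. fact (k - 1) * fact (card C - k)"]
    by simp
  also have "\<dots> = (\<Sum>k\<in>{1..m}. fact (m - 1))"
    by (rule sum.cong[OF refl]) (use binom_fact_real in \<open>auto simp: mult_ac\<close>)
  also have "\<dots> = real m * fact (m - 1)" by simp
  finally have "fact m = real (card (cycperms C)) + (real m * fact (m - 1) - fact (m - 1))" .
  moreover have "(fact m :: real) = real m * fact (m - 1)" using m1 fact_reduce[of m, where 'a=real] by simp
  ultimately show ?case using m_def by simp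
qed

lemma Fp_formula:
  fixes u e :: "nat \<Rightarrow> real"
  assumes e0: "e 0 = 1"
    and rec: "\<And>m. real (Suc m) * e (Suc m) = (\<Sum>j\<in>{1..Suc m}. u j * e (Suc m - j))"
  shows "finite A \<Longrightarrow> Fp (\<lambda>c. u (card c)) A = fact (card A) * e (card A)"
proof (induction "card A" arbitrary: A rule: less_induct)
  case less
  show ?case
  proof (cases "A = {}")
    case True then show ?thesis by (simp add: Fp_empty e0)
  next
    case False
    then obtain a where a: "a \<in> A" by auto
    define M where "M = card A"
    have M1: "M \<ge> 1" using less.prems False M_def by (metis One_nat_def Suc_leI card_gt_0_iff)
    have "Fp (\<lambda>c. u (card c)) A = (\<Sum>C\<in>{C. C \<subseteq> A \<and> a \<in> C}. real (card (cycperms C)) * u (card C) * Fp (\<lambda>c. u (card c)) (A - C))"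
      by (rule decomp[OF less.prems a])
    also have "\<dots> = (\<Sum>C\<in>{C. C \<subseteq> A \<and> a \<in> C}. fact (card C - 1) * u (card C) * (fact (M - card C) * e (M - card C)))"
    proof (rule sum.cong[OF refl])
      fix C assume "C \<in> {C. C \<subseteq> A \<and> a \<in> C}"
      then have C: "C \<subseteq> A" "a \<in> C" by auto
      have fC: "finite C" using C less.prems finite_subset by blast
      have cd: "card (A - C) = M - card C" using C fC M_def by (simp add: card_Diff_subset)
      have "card C \<ge> 1" using C fC by (metis One_nat_def Suc_leI card_gt_0_iff empty_iff)
      then have lt: "card (A - C) < card A" using cd M1 M_def by simp
      show "real (card (cycperms C)) * u (card C) * Fp (\<lambda>c. u (card c)) (A - C) =
          fact (card C - 1) * u (card C) * (fact (M - card C) * e (M - card C))"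
        using card_cycperms[OF fC] C less.hyps[OF lt] less.prems cd by auto
    qed
    also have "\<dots> = (\<Sum>k\<in>{1..M}. real ((M - 1) choose (k - 1)) * (fact (k - 1) * u k * (fact (M - k) * e (M - k))))"
      unfolding M_def by (rule sum_subsets_containing[OF less.prems a])
    also have "\<dots> = (\<Sum>k\<in>{1..M}. fact (M - 1) * (u k * e (M - k)))"
    proof (rule sum.cong[OF refl])
      fix k assume "k \<in> {1..M}"
      then have "real ((M - 1) choose (k - 1)) * fact (k - 1) * fact (M - k) = fact (M - 1)"
        by (intro binom_fact_real) auto
      moreover have "real ((M - 1) choose (k - 1)) * (fact (k - 1) * u k * (fact (M - k) * e (M - k))) =
          (real ((M - 1) choose (k - 1)) * fact (k - 1) * fact (M - k)) * (u k * e (M - k))"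
        by (simp add: mult_ac)
      ultimately show "real ((M - 1) choose (k - 1)) * (fact (k - 1) * u k * (fact (M - k) * e (M - k))) =
          fact (M - 1) * (u k * e (M - k))" by simp
    qed
    also have "\<dots> = fact (M - 1) * (\<Sum>k\<in>{1..M}. u k * e (M - k))" by (simp add: sum_distrib_left)
    also have "(\<Sum>k\<in>{1..M}. u k * e (M - k)) = real M * e M"
      using rec[of "M - 1"] M1 by simp
    also have "fact (M - 1) * (real M * e M) = fact M * e M"
      using M1 fact_reduce[of M, where 'a=real] by (simp add: mult_ac)
    finally show ?thesis using M_def by simp
  qed
qed

definition cntle :: "nat list \<Rightarrow> nat \<Rightarrow> nat" where
  "cntle a j = card {i. i < length a \<and> a ! i \<le> j}"

lemma cntle_sort: "cntle (sort a) j = cntle a j"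
proof -
  have "cntle a j = length (filter (\<lambda>v. v \<le> j) a)" by (simp add: cntle_def length_filter_conv_card)
  moreover have "cntle (sort a) j = length (filter (\<lambda>v. v \<le> j) (sort a))" by (simp add: cntle_def length_filter_conv_card)
  moreover have "length (filter (\<lambda>v. v \<le> j) (sort a)) = length (filter (\<lambda>v. v \<le> j) a)"
    by (metis mset_filter mset_sort size_mset)
  ultimately show ?thesis by simp
qed

lemma sorted_cnt:
  assumes s: "sorted s" and j: "1 \<le> j" "j \<le> length s"
  shows "s ! (j - 1) \<le> j \<longleftrightarrow> cntle s j \<ge> j"
proof
  assume h: "s ! (j - 1) \<le> j"
  have "{0..<j} \<subseteq> {i. i < length s \<and> s ! i \<le> j}"
  proof
    fix i assume "i \<in> {0..<j}"
    then have "i \<le> j - 1" "i < length s" using j by auto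
    then have "s ! i \<le> s ! (j - 1)" using s j by (intro sorted_nth_mono) auto
    then show "i \<in> {i. i < length s \<and> s ! i \<le> j}" using h \<open>i < length s\<close> by auto
  qed
  then have "card {0..<j} \<le> cntle s j" unfolding cntle_def by (intro card_mono) auto
  then show "cntle s j \<ge> j" by simp
next
  assume h: "cntle s j \<ge> j"
  show "s ! (j - 1) \<le> j"
  proof (rule ccontr)
    assume "\<not> s ! (j - 1) \<le> j"
    then have gt: "s ! (j - 1) > j" by simp
    have "{i. i < length s \<and> s ! i \<le> j} \<subseteq> {0..<j - 1}"
    proof
      fix i assume i: "i \<in> {i. i < length s \<and> s ! i \<le> j}"
      show "i \<in> {0..<j - 1}"
      proof (rule ccontr)
        assume "i \<notin> {0..<j - 1}"
        then have "j - 1 \<le> i" by simp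
        then have "s ! (j - 1) \<le> s ! i" using s i by (intro sorted_nth_mono) auto
        then show False using gt i by simp
      qed
    qed
    then have "cntle s j \<le> j - 1" unfolding cntle_def by (metis card_atLeastLessThan card_mono finite_atLeastLessThan diff_zero)
    then show False using h j by simp
  qed
qed

lemma pf_iff:
  assumes len: "length a = n"
  shows "a \<in> parking_functions n \<longleftrightarrow> (\<forall>i<n. a ! i \<ge> 1) \<and> (\<forall>j\<in>{1..n}. cntle a j \<ge> j)"
proof -
  have srt: "sorted (sort a)" "length (sort a) = n" using len by auto
  have "(\<forall>i<n. sort a ! i \<le> i + 1) \<longleftrightarrow> (\<forall>j\<in>{1..n}. sort a ! (j - 1) \<le> j)"
  proof
    assume "\<forall>i<n. sort a ! i \<le> i + 1"
    then show "\<forall>j\<in>{1..n}. sort a ! (j - 1) \<le> j"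
    proof (intro ballI)
      fix j assume a1: "\<forall>i<n. sort a ! i \<le> i + 1" and "j \<in> {1..n}"
      then have "j - 1 < n" "j - 1 + 1 = j" by auto
      then show "sort a ! (j - 1) \<le> j" using a1 by metis
    qed
  next
    assume h: "\<forall>j\<in>{1..n}. sort a ! (j - 1) \<le> j"
    show "\<forall>i<n. sort a ! i \<le> i + 1"
    proof (intro allI impI)
      fix i assume "i < n"
      then show "sort a ! i \<le> i + 1" using h[rule_format, of "i + 1"] by simp
    qed
  qed
  also have "\<dots> \<longleftrightarrow> (\<forall>j\<in>{1..n}. cntle a j \<ge> j)"
  proof (intro ball_cong[OF refl])
    fix j assume "j \<in> {1..n}"
    then show "sort a ! (j - 1) \<le> j \<longleftrightarrow> cntle a j \<ge> j"
      using sorted_cnt[OF srt(1), of j] srt(2) cntle_sort[of a j] by simp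
  qed
  finally show ?thesis unfolding parking_functions_def using len by auto
qed

definition sh :: "nat \<Rightarrow> nat \<Rightarrow> nat \<Rightarrow> nat" where
  "sh M k y = (y - 1 + k) mod M + 1"

lemma sh_range: "0 < M \<Longrightarrow> 1 \<le> sh M k y \<and> sh M k y \<le> M"
  unfolding sh_def by (simp add: Suc_leI)

lemma sh_0: "1 \<le> y \<Longrightarrow> y \<le> M \<Longrightarrow> sh M 0 y = y"
  unfolding sh_def by simp

lemma sh_comp: "0 < M \<Longrightarrow> sh M k (sh M k' y) = sh M (k' + k) y"
  unfolding sh_def by (simp add: mod_add_left_eq add.assoc)

lemma sh_mod: "sh M (k mod M) y = sh M k y"
  unfolding sh_def by (simp add: mod_add_right_eq)

definition G :: "nat \<Rightarrow> nat \<Rightarrow> nat \<Rightarrow> nat" where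
  "G n y t = (t + Suc n - y) div Suc n"

lemma indic:
  assumes y: "1 \<le> y" "y \<le> Suc n" and s: "s \<le> n" and j: "j \<le> n"
  shows "G n y (s + j) = G n y s + (if sh (Suc n) (Suc n - s) y \<le> j then 1 else 0)"
proof (cases "y \<le> s")
  case True
  have e: "y - 1 + (Suc n - s) = y + n - s" using True y s by simp
  have "y + n - s < Suc n" using True y s by simp
  then have m: "(y - 1 + (Suc n - s)) mod Suc n = y + n - s" unfolding e by simp
  have g1: "G n y s = 1" unfolding G_def using True y s by (intro div_nat_eqI) auto
  show ?thesis
  proof (cases "y + n - s < j")
    case True2: True
    have "G n y (s + j) = 2" unfolding G_def using True True2 y s j by (intro div_nat_eqI) auto
    then show ?thesis using g1 m True2 by (simp add: sh_def)
  next
    case False2: False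
    have "G n y (s + j) = 1" unfolding G_def using True False2 y s j by (intro div_nat_eqI) auto
    then show ?thesis using g1 m False2 by (simp add: sh_def)
  qed
next
  case False
  have m: "(y - 1 + (Suc n - s)) mod Suc n = y - 1 - s"
    using False y s by (intro mod_nat_eqI) auto
  have g0: "G n y s = 0" unfolding G_def using False y s by (intro div_nat_eqI) auto
  show ?thesis
  proof (cases "y - 1 - s < j")
    case True2: True
    have "G n y (s + j) = 1" unfolding G_def using False True2 y s j by (intro div_nat_eqI) auto
    then show ?thesis using g0 m True2 by (simp add: sh_def)
  next
    case False2: False
    have "G n y (s + j) = 0" unfolding G_def using False False2 y s j by (intro div_nat_eqI) auto
    then show ?thesis using g0 m False2 by (simp add: sh_def)
  qed
qed

lemma G_period: "y \<le> Suc n \<Longrightarrow> G n y (t + Suc n) = G n y t + 1"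
proof -
  assume "y \<le> Suc n"
  then have eq: "t + Suc n + Suc n - y = (t + Suc n - y) + Suc n" by simp
  show ?thesis unfolding G_def eq by (rule div_add_self2) simp
qed

definition H :: "nat \<Rightarrow> nat list \<Rightarrow> nat \<Rightarrow> nat" where
  "H n b t = (\<Sum>i<n. G n (b ! i) t)"

definition E :: "nat \<Rightarrow> nat list \<Rightarrow> nat \<Rightarrow> int" where
  "E n b t = int (H n b t) - int t"

lemma E_period:
  assumes "\<forall>i<n. b ! i \<le> Suc n"
  shows "E n b (t + Suc n) = E n b t - 1"
proof -
  have "H n b (t + Suc n) = (\<Sum>i<n. G n (b ! i) t + 1)"
    unfolding H_def by (rule sum.cong[OF refl]) (use assms G_period in auto)
  also have "\<dots> = H n b t + n" unfolding H_def by (simp only: sum.distrib) simp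
  finally have "H n b (t + Suc n) = H n b t + n" .
  then show ?thesis unfolding E_def by simp
qed

lemma cnt_shift:
  assumes len: "length b = n" and rng: "\<forall>i<n. 1 \<le> b ! i \<and> b ! i \<le> Suc n"
    and s: "s \<le> n" and j: "j \<le> n"
  shows "int (cntle (map (sh (Suc n) (Suc n - s)) b) j) = int (H n b (s + j)) - int (H n b s)"
proof -
  have "cntle (map (sh (Suc n) (Suc n - s)) b) j = card ({..<n} \<inter> {i. sh (Suc n) (Suc n - s) (b ! i) \<le> j})"
    unfolding cntle_def using len by (intro arg_cong[where f=card]) auto
  also have "\<dots> = (\<Sum>i<n. if sh (Suc n) (Suc n - s) (b ! i) \<le> j then 1 else 0)"
    by (simp add: sum.If_cases)
  finally have c: "cntle (map (sh (Suc n) (Suc n - s)) b) j = (\<Sum>i<n. if sh (Suc n) (Suc n - s) (b ! i) \<le> j then 1 else 0)" .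
  have "H n b (s + j) = (\<Sum>i<n. G n (b ! i) s + (if sh (Suc n) (Suc n - s) (b ! i) \<le> j then 1 else 0))"
    unfolding H_def by (rule sum.cong[OF refl]) (use rng s j indic in auto)
  also have "\<dots> = H n b s + cntle (map (sh (Suc n) (Suc n - s)) b) j"
    unfolding H_def c by (simp add: sum.distrib)
  finally show ?thesis by simp
qed

definition good :: "nat \<Rightarrow> nat list \<Rightarrow> nat \<Rightarrow> bool" where
  "good n b s \<longleftrightarrow> (\<forall>j\<in>{1..n}. E n b s \<le> E n b (s + j))"

lemma pf_shift:
  assumes len: "length b = n" and rng: "\<forall>i<n. 1 \<le> b ! i \<and> b ! i \<le> Suc n" and s: "s \<le> n"
  shows "map (sh (Suc n) (Suc n - s)) b \<in> parking_functions n \<longleftrightarrow> good n b s"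
proof -
  have ge1: "\<forall>i<n. map (sh (Suc n) (Suc n - s)) b ! i \<ge> 1" using len sh_range[of "Suc n"] by auto
  have "(\<forall>j\<in>{1..n}. cntle (map (sh (Suc n) (Suc n - s)) b) j \<ge> j) \<longleftrightarrow> good n b s"
    unfolding good_def
  proof (intro ball_cong[OF refl])
    fix j assume "j \<in> {1..n}"
    then have "int (cntle (map (sh (Suc n) (Suc n - s)) b) j) = int (H n b (s + j)) - int (H n b s)"
      using cnt_shift[OF len rng s] by auto
    then show "cntle (map (sh (Suc n) (Suc n - s)) b) j \<ge> j \<longleftrightarrow> E n b s \<le> E n b (s + j)"
      unfolding E_def by linarith
  qed
  then show ?thesis using pf_iff[of "map (sh (Suc n) (Suc n - s)) b" n] len ge1 by simp
qed

lemma good_unique: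
  assumes rng: "\<forall>i<n. b ! i \<le> Suc n" and g1: "good n b s1" and g2: "good n b s2"
    and s: "s1 \<le> n" "s2 \<le> n"
  shows "s1 = s2"
proof (rule ccontr)
  assume ne: "s1 \<noteq> s2"
  have *: False if "good n b p" "good n b q" "p < q" "q \<le> n" for p q
  proof -
    have j1: "q - p \<in> {1..n}" using that by auto
    have "E n b p \<le> E n b (p + (q - p))" using that(1) j1 unfolding good_def by blast
    then have a: "E n b p \<le> E n b q" using that by simp
    have j2: "p + Suc n - q \<in> {1..n}" using that by auto
    have "E n b q \<le> E n b (q + (p + Suc n - q))" using that(2) j2 unfolding good_def by blast
    also have "q + (p + Suc n - q) = p + Suc n" using that by simp
    also have "E n b (p + Suc n) = E n b p - 1" by (rule E_period[OF rng])
    finally show False using a by simp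
  qed
  show False
  proof (cases "s1 < s2")
    case True then show False using * g1 g2 s by blast
  next
    case False then have "s2 < s1" using ne by simp
    then show False using * g1 g2 s by blast
  qed
qed

lemma good_exists:
  assumes rng: "\<forall>i<n. b ! i \<le> Suc n"
  shows "\<exists>s\<le>n. good n b s"
proof -
  define mn where "mn = Min (E n b ` {0..n})"
  have mn_le: "s \<le> n \<Longrightarrow> mn \<le> E n b s" for s unfolding mn_def by (intro Min_le) auto
  have "mn \<in> E n b ` {0..n}" unfolding mn_def by (intro Min_in) auto
  then obtain s0 where s0: "s0 \<le> n" "E n b s0 = mn" by auto
  define s where "s = (LEAST s. s \<le> n \<and> E n b s = mn)"
  have sP: "s \<le> n \<and> E n b s = mn" unfolding s_def by (rule LeastI[of _ s0]) (use s0 in auto)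
  have smin: "p < s \<Longrightarrow> E n b p > mn" for p
  proof -
    assume "p < s"
    then have "\<not> (p \<le> n \<and> E n b p = mn)" unfolding s_def using not_less_Least by blast
    then show "E n b p > mn" using mn_le[of p] \<open>p < s\<close> sP by force
  qed
  have "good n b s" unfolding good_def
  proof
    fix j assume j: "j \<in> {1..n}"
    show "E n b s \<le> E n b (s + j)"
    proof (cases "s + j \<le> n")
      case True then show ?thesis using mn_le sP by simp
    next
      case False
      define p where "p = s + j - Suc n"
      have pl: "p < s" using j False p_def by auto
      have "s + j = p + Suc n" using False p_def by simp
      then have "E n b (s + j) = E n b p - 1" using E_period[OF rng] by simp
      then show ?thesis using smin[OF pl] sP by simp
    qed
  qed
  then show ?thesis using sP by blast
qed

lemma s_of_k: "k \<le> n \<Longrightarrow> (Suc n - (Suc n - k) mod Suc n) mod Suc n = k"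
  by (cases "k = 0") (auto simp: mod_less)

lemma mod_Suc_le: "x mod Suc n \<le> n"
  using less_Suc_eq_le mod_less_divisor zero_less_Suc by blast

lemma s_of_k_le: "(Suc n - k) mod Suc n \<le> n"
  using less_Suc_eq_le mod_less_divisor zero_less_Suc by blast

lemma sh_list_k:
  assumes len: "length b = n" and rng: "\<forall>i<n. 1 \<le> b ! i \<and> b ! i \<le> Suc n" and k: "k \<le> n"
  shows "map (sh (Suc n) k) b \<in> parking_functions n \<longleftrightarrow> good n b ((Suc n - k) mod Suc n)"
proof -
  have e: "map (sh (Suc n) k) b = map (sh (Suc n) (Suc n - (Suc n - k) mod Suc n)) b"
    using sh_mod[of "Suc n" "Suc n - (Suc n - k) mod Suc n"] s_of_k[OF k] by simp
  show ?thesis unfolding e by (rule pf_shift[OF len rng s_of_k_le])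
qed

lemma shift_ex1:
  assumes len: "length b = n" and rng: "\<forall>i<n. 1 \<le> b ! i \<and> b ! i \<le> Suc n"
  shows "\<exists>k\<le>n. map (sh (Suc n) k) b \<in> parking_functions n"
    and "k1 \<le> n \<Longrightarrow> k2 \<le> n \<Longrightarrow> map (sh (Suc n) k1) b \<in> parking_functions n \<Longrightarrow>
         map (sh (Suc n) k2) b \<in> parking_functions n \<Longrightarrow> k1 = k2"
proof -
  have rng': "\<forall>i<n. b ! i \<le> Suc n" using rng by auto
  obtain s where s: "s \<le> n" "good n b s" using good_exists[OF rng'] by blast
  define k where "k = (Suc n - s) mod Suc n"
  have k: "k \<le> n" unfolding k_def by (rule s_of_k_le)
  have "(Suc n - k) mod Suc n = s" unfolding k_def by (rule s_of_k[OF s(1)])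
  then show "\<exists>k\<le>n. map (sh (Suc n) k) b \<in> parking_functions n"
    using sh_list_k[OF len rng k] s k by auto
next
  assume k: "k1 \<le> n" "k2 \<le> n" and p: "map (sh (Suc n) k1) b \<in> parking_functions n"
     "map (sh (Suc n) k2) b \<in> parking_functions n"
  have rng': "\<forall>i<n. b ! i \<le> Suc n" using rng by auto
  have "(Suc n - k1) mod Suc n = (Suc n - k2) mod Suc n"
    using good_unique[OF rng'] sh_list_k[OF len rng k(1)] sh_list_k[OF len rng k(2)] p s_of_k_le by blast
  then show "k1 = k2" using s_of_k[OF k(1)] s_of_k[OF k(2)] by metis
qed

lemma map_sh_comp:
  "map (sh (Suc n) k) (map (sh (Suc n) k') b) = map (sh (Suc n) (k' + k)) b"
  by (simp add: sh_comp)

lemma map_sh_id: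
  assumes "\<forall>y\<in>set b. 1 \<le> y \<and> y \<le> Suc n" "k mod Suc n = 0"
  shows "map (sh (Suc n) k) b = b"
proof -
  have "sh (Suc n) k y = y" if "y \<in> set b" for y
    using sh_mod[of "Suc n" k y] assms that sh_0[of y "Suc n"] by simp
  then show ?thesis by (simp add: map_idI)
qed

lemma pf_le:
  assumes "a \<in> parking_functions n" "i < n"
  shows "1 \<le> a ! i \<and> a ! i \<le> n"
proof -
  have len: "length a = n" and pf: "\<forall>i<n. a ! i \<ge> 1" "\<forall>i<n. sort a ! i \<le> i + 1"
    using assms unfolding parking_functions_def by auto
  have "a ! i \<in> set (sort a)" using assms len by simp
  then obtain j where j: "j < n" "sort a ! j = a ! i" using len by (metis in_set_conv_nth length_sort)
  then show ?thesis using pf assms by fastforce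
qed

lemma mod_eq0_imp:
  assumes "k \<le> n" "k' \<le> n" "(k + (Suc n - k')) mod Suc n = 0"
  shows "k = k'"
proof (rule ccontr)
  assume ne: "k \<noteq> k'"
  show False
  proof (cases "k < k'")
    case True
    then have "(k + (Suc n - k')) mod Suc n = k + (Suc n - k')" using assms by (intro mod_less) auto
    then show False using assms by simp
  next
    case False
    then have gt: "k > k'" using ne by simp
    have "(k + (Suc n - k')) mod Suc n = k - k'" using gt assms by (intro mod_nat_eqI) auto
    then show False using assms gt by simp
  qed
qed

definition Tset :: "nat \<Rightarrow> (nat \<Rightarrow> nat) \<Rightarrow> nat list set" where
  "Tset n \<sigma> = {b. length b = n \<and> (\<forall>i<n. 1 \<le> b ! i \<and> b ! i \<le> Suc n) \<and> (\<forall>i<n. b ! (\<sigma> i) = b ! i)}"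

lemma card_fix_times:
  assumes \<sigma>: "\<sigma> permutes {..<n}"
  shows "card (fixed_pfs n \<sigma>) * Suc n = card (Tset n \<sigma>)"
proof -
  have \<sigma>lt: "i < n \<Longrightarrow> \<sigma> i < n" for i using permutes_in_image[OF \<sigma>] by auto
  define \<Phi> where "\<Phi> = (\<lambda>(a, k). map (sh (Suc n) k) a)"
  have fixD: "length a = n \<and> (\<forall>i<n. 1 \<le> a ! i \<and> a ! i \<le> Suc n) \<and> (\<forall>i<n. a ! (\<sigma> i) = a ! i) \<and> a \<in> parking_functions n"
    if "a \<in> fixed_pfs n \<sigma>" for a
    using that pf_le[of a n] unfolding fixed_pfs_def parking_functions_def by fastforce
  have setb: "\<forall>y\<in>set b. 1 \<le> y \<and> y \<le> Suc n" if "length b = n" "\<forall>i<n. 1 \<le> b ! i \<and> b ! i \<le> Suc n" for b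
    using that by (auto simp: in_set_conv_nth)
  have "bij_betw \<Phi> (fixed_pfs n \<sigma> \<times> {..n}) (Tset n \<sigma>)"
    unfolding bij_betw_def
  proof (intro conjI)
    show "inj_on \<Phi> (fixed_pfs n \<sigma> \<times> {..n})"
    proof (rule inj_onI)
      fix p q assume p: "p \<in> fixed_pfs n \<sigma> \<times> {..n}" and q: "q \<in> fixed_pfs n \<sigma> \<times> {..n}" and eqpq: "\<Phi> p = \<Phi> q"
      obtain a k where pdef: "p = (a, k)" by (cases p)
      obtain a' k' where qd: "q = (a', k')" by (cases q)
      have a: "a \<in> fixed_pfs n \<sigma>" "k \<in> {..n}" using p pdef by auto
      have a': "a' \<in> fixed_pfs n \<sigma>" "k' \<in> {..n}" using q qd by auto
      have eq: "\<Phi> (a, k) = \<Phi> (a', k')" using eqpq pdef qd by simp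
      from fixD[OF a(1)] have A: "length a = n" "\<forall>i<n. 1 \<le> a ! i \<and> a ! i \<le> Suc n" "a \<in> parking_functions n" by auto
      from fixD[OF a'(1)] have A': "length a' = n" "\<forall>i<n. 1 \<le> a' ! i \<and> a' ! i \<le> Suc n" "a' \<in> parking_functions n" by auto
      have eq': "map (sh (Suc n) k) a = map (sh (Suc n) k') a'" using eq by (simp add: \<Phi>_def)
      define d where "d = (k + (Suc n - k')) mod Suc n"
      have "map (sh (Suc n) d) a = map (sh (Suc n) (k + (Suc n - k'))) a"
        unfolding d_def by (simp add: sh_mod)
      also have "\<dots> = map (sh (Suc n) (Suc n - k')) (map (sh (Suc n) k) a)" by (rule map_sh_comp[symmetric])
      also have "\<dots> = map (sh (Suc n) (Suc n - k')) (map (sh (Suc n) k') a')" using eq' by simp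
      also have "\<dots> = map (sh (Suc n) (k' + (Suc n - k'))) a'" by (rule map_sh_comp)
      also have "\<dots> = a'" using a'(2) by (intro map_sh_id setb A'(1,2)) auto
      finally have pd: "map (sh (Suc n) d) a \<in> parking_functions n" using A'(3) by simp
      have p0: "map (sh (Suc n) 0) a \<in> parking_functions n" using map_sh_id[OF setb[OF A(1,2)], of 0] A(3) by simp
      have dle: "d \<le> n" unfolding d_def by (rule mod_Suc_le)
      have d0: "d = 0" by (rule shift_ex1(2)[OF A(1,2) dle _ pd p0]) simp
      have kk: "k = k'" using mod_eq0_imp[of k n k'] a(2) a'(2) d0 unfolding d_def by simp
      have "a = map (sh (Suc n) (k + (Suc n - k))) a" using a(2) by (intro map_sh_id[symmetric] setb A(1,2)) auto
      also have "\<dots> = map (sh (Suc n) (Suc n - k)) (map (sh (Suc n) k) a)" by (rule map_sh_comp[symmetric])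
      also have "\<dots> = map (sh (Suc n) (Suc n - k)) (map (sh (Suc n) k) a')" using eq' kk by simp
      also have "\<dots> = map (sh (Suc n) (k + (Suc n - k))) a'" by (rule map_sh_comp)
      also have "\<dots> = a'" using a'(2) kk by (intro map_sh_id setb A'(1,2)) auto
      finally have aa: "a = a'" .
      show "p = q" using kk pdef qd aa by simp
    qed
  next
    show "\<Phi> ` (fixed_pfs n \<sigma> \<times> {..n}) = Tset n \<sigma>"
    proof (intro equalityI subsetI)
      fix b assume "b \<in> \<Phi> ` (fixed_pfs n \<sigma> \<times> {..n})"
      then obtain a k where a: "a \<in> fixed_pfs n \<sigma>" and b: "b = map (sh (Suc n) k) a" by (auto simp: \<Phi>_def)
      from fixD[OF a] show "b \<in> Tset n \<sigma>" using b sh_range[of "Suc n"] \<sigma>lt by (auto simp: Tset_def)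
    next
      fix b assume b: "b \<in> Tset n \<sigma>"
      then have B: "length b = n" "\<forall>i<n. 1 \<le> b ! i \<and> b ! i \<le> Suc n" "\<forall>i<n. b ! (\<sigma> i) = b ! i"
        by (auto simp: Tset_def)
      obtain k0 where k0: "k0 \<le> n" "map (sh (Suc n) k0) b \<in> parking_functions n" using shift_ex1(1)[OF B(1,2)] by blast
      define a where "a = map (sh (Suc n) k0) b"
      have af: "a \<in> fixed_pfs n \<sigma>" using k0 B(1,3) \<sigma>lt by (auto simp: fixed_pfs_def a_def)
      define k where "k = (Suc n - k0) mod Suc n"
      have kle: "k \<le> n" unfolding k_def by (rule mod_Suc_le)
      have "\<Phi> (a, k) = map (sh (Suc n) (k0 + k)) b" unfolding \<Phi>_def a_def by (simp only: prod.case map_sh_comp)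
      also have "\<dots> = b"
      proof (rule map_sh_id[OF setb[OF B(1,2)]])
        show "(k0 + k) mod Suc n = 0" unfolding k_def using k0(1)
          by (cases "k0 = 0") (auto simp: mod_add_right_eq[symmetric])
      qed
      finally show "b \<in> \<Phi> ` (fixed_pfs n \<sigma> \<times> {..n})" using af kle by force
    qed
  qed
  then have "card (fixed_pfs n \<sigma> \<times> {..n}) = card (Tset n \<sigma>)" by (rule bij_betw_same_card)
  then show ?thesis by (simp add: card_cartesian_product)
qed

lemma const_on_orbit:
  assumes \<sigma>: "\<sigma> permutes {..<n}" and inv: "\<forall>i<n. b ! (\<sigma> i) = b ! i" and i: "i < n"
  shows "j \<in> orbit \<sigma> i \<Longrightarrow> b ! j = b ! i"
proof (induction rule: orbit.induct)
  case base then show ?case using inv i by simp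
next
  case (step y)
  have "y < n" using permutes_orbit_subset[OF \<sigma>, of i] i step.hyps by auto
  then show ?case using inv step.IH by simp
qed

lemma card_Tset:
  assumes \<sigma>: "\<sigma> permutes {..<n}"
  shows "card (Tset n \<sigma>) = Suc n ^ card (cycles_of n \<sigma>)"
proof -
  have perm: "permutation \<sigma>" using \<sigma> by (auto simp: permutation_permutes)
  have selfin: "i \<in> orbit \<sigma> i" for i by (rule permutation_self_in_orbit[OF perm])
  have \<sigma>lt: "i < n \<Longrightarrow> \<sigma> i < n" for i using permutes_in_image[OF \<sigma>] by auto
  define \<Omega> where "\<Omega> = (\<lambda>f::nat set \<Rightarrow> nat. map (\<lambda>i. f (orbit \<sigma> i)) [0..<n])"
  define P where "P = PiE (cycles_of n \<sigma>) (\<lambda>_. {1..Suc n})"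
  have "bij_betw \<Omega> P (Tset n \<sigma>)"
    unfolding bij_betw_def
  proof (intro conjI)
    show "inj_on \<Omega> P"
    proof (rule inj_onI)
      fix f g assume f: "f \<in> P" and g: "g \<in> P" and eq: "\<Omega> f = \<Omega> g"
      show "f = g"
      proof (rule PiE_ext[OF f[unfolded P_def] g[unfolded P_def]])
        fix c assume "c \<in> cycles_of n \<sigma>"
        then obtain i where i: "i < n" "c = orbit \<sigma> i" by (auto simp: cycles_of_def)
        have "\<Omega> f ! i = \<Omega> g ! i" using eq by simp
        then show "f c = g c" using i by (simp add: \<Omega>_def)
      qed
    qed
  next
    show "\<Omega> ` P = Tset n \<sigma>"
    proof (intro equalityI subsetI)
      fix b assume "b \<in> \<Omega> ` P"
      then obtain f where f: "f \<in> P" "b = \<Omega> f" by auto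
      have inr: "i < n \<Longrightarrow> f (orbit \<sigma> i) \<in> {1..Suc n}" for i
        using f(1) by (auto simp: P_def cycles_of_def PiE_def Pi_def)
      have "orbit \<sigma> (\<sigma> i) = orbit \<sigma> i" for i by (rule permutation_orbit_step[OF perm])
      then show "b \<in> Tset n \<sigma>" using f(2) inr \<sigma>lt by (auto simp: Tset_def \<Omega>_def)
    next
      fix b assume b: "b \<in> Tset n \<sigma>"
      then have B: "length b = n" "\<forall>i<n. 1 \<le> b ! i \<and> b ! i \<le> Suc n" "\<forall>i<n. b ! (\<sigma> i) = b ! i"
        by (auto simp: Tset_def)
      define rep where "rep = (\<lambda>c. SOME i. i < n \<and> c = orbit \<sigma> i)"
      have rep: "c \<in> cycles_of n \<sigma> \<Longrightarrow> rep c < n \<and> c = orbit \<sigma> (rep c)" for c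
        unfolding rep_def cycles_of_def by (rule someI_ex) auto
      define f where "f = restrict (\<lambda>c. b ! rep c) (cycles_of n \<sigma>)"
      have fP: "f \<in> P" unfolding f_def P_def using rep B(2) by auto
      have "\<Omega> f = b"
      proof (rule nth_equalityI)
        show "length (\<Omega> f) = length b" using B(1) by (simp add: \<Omega>_def)
      next
        fix i assume "i < length (\<Omega> f)"
        then have i: "i < n" by (simp add: \<Omega>_def)
        have c: "orbit \<sigma> i \<in> cycles_of n \<sigma>" using i by (auto simp: cycles_of_def)
        from rep[OF c] have r: "rep (orbit \<sigma> i) < n" "orbit \<sigma> i = orbit \<sigma> (rep (orbit \<sigma> i))" by auto
        have "i \<in> orbit \<sigma> (rep (orbit \<sigma> i))" using r(2) selfin[of i] by simp
        then have "b ! i = b ! rep (orbit \<sigma> i)" by (rule const_on_orbit[OF \<sigma> B(3) r(1)])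
        then show "\<Omega> f ! i = b ! i" using i c by (simp add: \<Omega>_def f_def)
      qed
      then show "b \<in> \<Omega> ` P" using fP by blast
    qed
  qed
  then have "card (Tset n \<sigma>) = card P" by (simp add: bij_betw_same_card)
  also have "card P = Suc n ^ card (cycles_of n \<sigma>)"
    unfolding P_def by (simp add: card_PiE cycles_of_def)
  finally show ?thesis .
qed

theorem pollak:
  assumes \<sigma>: "\<sigma> permutes {..<n}" and n: "n \<ge> 1"
  shows "card (fixed_pfs n \<sigma>) = Suc n ^ (card (cycles_of n \<sigma>) - 1)"
proof -
  have c1: "card (cycles_of n \<sigma>) \<ge> 1"
  proof -
    have "orbit \<sigma> 0 \<in> cycles_of n \<sigma>" using n by (auto simp: cycles_of_def)
    then have "cycles_of n \<sigma> \<noteq> {}" by auto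
    moreover have "finite (cycles_of n \<sigma>)" by (simp add: cycles_of_def)
    ultimately show ?thesis by (simp add: Suc_leI card_gt_0_iff)
  qed
  have "card (fixed_pfs n \<sigma>) * Suc n = Suc n ^ card (cycles_of n \<sigma>)"
    using card_fix_times[OF \<sigma>] card_Tset[OF \<sigma>] by simp
  also have "\<dots> = Suc n ^ (card (cycles_of n \<sigma>) - 1) * Suc n"
    using c1 by (metis Suc_diff_le diff_Suc_1 power_Suc2)
  finally have "card (fixed_pfs n \<sigma>) * Suc n = Suc n ^ (card (cycles_of n \<sigma>) - 1) * Suc n" .
  then show ?thesis by (metis mult_right_cancel nat.distinct(1))
qed


definition gc :: "real \<Rightarrow> real fps" where
  "gc c = Abs_fps (\<lambda>k. if even k then 2 * c ^ Suc k else 0)"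

definition fc :: "real \<Rightarrow> real fps" where
  "fc c = (1 + fps_const c * fps_X) * inverse (1 - fps_const c * fps_X)"

lemma gc_mult: "(1 - fps_const c ^ 2 * fps_X^2) * gc c = fps_const (2 * c)"
proof (rule fps_ext)
  fix k
  have e: "(1 - fps_const c ^ 2 * fps_X^2) * gc c = gc c - fps_const (c^2) * (fps_X^2 * gc c)"
    by (simp add: algebra_simps fps_const_power)
  have "((1 - fps_const c ^ 2 * fps_X^2) * gc c) $ k = gc c $ k - c^2 * (fps_X^2 * gc c) $ k"
    unfolding e by simp
  also have "\<dots> = fps_const (2 * c) $ k"
  proof (cases "k < 2")
    case True then show ?thesis by (cases k) (auto simp: gc_def fps_X_power_mult_nth)
  next
    case False
    then obtain j where j: "k = Suc (Suc j)" by (metis add_2_eq_Suc le_add_diff_inverse not_less)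
    have "(fps_X^2 * gc c) $ k = gc c $ j" using j by (simp add: fps_X_power_mult_nth)
    then show ?thesis using j by (auto simp: gc_def power2_eq_square)
  qed
  finally show "((1 - fps_const c ^ 2 * fps_X^2) * gc c) $ k = fps_const (2 * c) $ k" .
qed

lemma fc_deriv: "fps_deriv (fc c) = fc c * gc c"
proof -
  define I where "I = inverse (1 - fps_const c * fps_X)"
  define D where "D = (1 - fps_const c * fps_X :: real fps)"
  have DI: "D * I = 1" unfolding D_def I_def by (rule inverse_mult_eq_1') simp
  have dI: "fps_deriv I = fps_const c * I^2"
    unfolding I_def by (subst fps_inverse_deriv) simp_all
  have lhs: "fps_deriv (fc c) = fps_const c * I + (1 + fps_const c * fps_X) * (fps_const c * I^2)"
    unfolding fc_def I_def[symmetric] by (simp add: dI)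
  have DD: "D^2 \<noteq> 0" unfolding D_def
  proof -
    have "(1 - fps_const c * fps_X :: real fps) $ 0 = 1" by simp
    have "(1 - fps_const c * fps_X :: real fps) \<noteq> 0"
    proof
      assume "(1 - fps_const c * fps_X :: real fps) = 0"
      then have "(1 - fps_const c * fps_X :: real fps) $ 0 = 0" by simp
      then show False by simp
    qed
    then show "(1 - fps_const c * fps_X)^2 \<noteq> (0 :: real fps)" by simp
  qed
  have "D^2 * fps_deriv (fc c) = fps_const (2 * c)"
  proof -
    have "D^2 * fps_deriv (fc c) = fps_const c * (D * I) * D + (1 + fps_const c * fps_X) * fps_const c * (D * I)^2"
      unfolding lhs by (simp add: algebra_simps power2_eq_square)
    also have "\<dots> = fps_const c * D + (1 + fps_const c * fps_X) * fps_const c" using DI by simp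
    also have "\<dots> = fps_const c + fps_const c" unfolding D_def by (simp add: algebra_simps)
    also have "\<dots> = fps_const (2 * c)" by (metis fps_const_add mult_2)
    finally show ?thesis .
  qed
  moreover have "D^2 * (fc c * gc c) = fps_const (2 * c)"
  proof -
    have "D^2 * (fc c * gc c) = (D * I) * ((1 + fps_const c * fps_X) * D * gc c)"
      unfolding fc_def I_def[symmetric] by (simp add: algebra_simps power2_eq_square)
    also have "(1 + fps_const c * fps_X) * D = 1 - fps_const c ^ 2 * fps_X^2"
      unfolding D_def by (simp add: algebra_simps power2_eq_square)
    finally have "D^2 * (fc c * gc c) = (D * I) * ((1 - fps_const c ^ 2 * fps_X^2) * gc c)" .
    then show ?thesis by (simp only: DI gc_mult mult_1_left)
  qed
  ultimately have "D^2 * fps_deriv (fc c) = D^2 * (fc c * gc c)" by simp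
  then show ?thesis using DD by simp
qed

lemma fc_0: "fc c $ 0 = 1"
  by (simp add: fc_def)

definition Wd :: "nat \<Rightarrow> (nat \<Rightarrow> real) \<Rightarrow> real fps" where
  "Wd N x = Abs_fps (\<lambda>k. shift_ps N (Suc k) x)"

lemma schurP_gf_Suc: "schurP_gf (Suc N) x = schurP_gf N x * fc (x N)"
  by (simp add: schurP_gf_def fc_def)

lemma Wd_Suc: "Wd (Suc N) x = Wd N x + gc (x N)"
  by (rule fps_ext) (auto simp: Wd_def gc_def shift_ps_def power_sum_def)

lemma Q_deriv: "fps_deriv (schurP_gf N x) = schurP_gf N x * Wd N x"
proof (induction N)
  case 0 then show ?case by (simp add: schurP_gf_def Wd_def shift_ps_def power_sum_def fps_eq_iff)
next
  case (Suc N)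
  show ?case unfolding schurP_gf_Suc Wd_Suc
    by (simp add: Suc.IH fc_deriv algebra_simps)
qed

lemma Q_0: "schurP_gf N x $ 0 = 1"
proof (induction N)
  case 0 then show ?case by (simp add: schurP_gf_def)
next
  case (Suc N) then show ?case by (simp add: schurP_gf_Suc fc_0)
qed

lemma Qpow_rec:
  fixes m :: nat
  shows "real (Suc k) * (schurP_gf N x ^ m) $ Suc k =
    real m * (\<Sum>j\<in>{1..Suc k}. shift_ps N j x * (schurP_gf N x ^ m) $ (Suc k - j))"
proof -
  define Q where "Q = schurP_gf N x"
  have d: "fps_deriv (Q ^ m) = fps_const (real m) * (Q ^ m * Wd N x)"
  proof (cases m)
    case 0 then show ?thesis by simp
  next
    case (Suc m')
    have "fps_deriv (Q ^ m) = fps_const (real m) * fps_deriv Q * Q ^ m'"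
      unfolding Suc by (subst fps_deriv_power) simp
    also have "\<dots> = fps_const (real m) * (Q ^ m * Wd N x)"
      using Suc by (simp add: Q_def Q_deriv algebra_simps)
    finally show ?thesis .
  qed
  have "real (Suc k) * (Q ^ m) $ Suc k = fps_deriv (Q ^ m) $ k" by simp
  also have "\<dots> = real m * (\<Sum>i=0..k. (Q ^ m) $ i * Wd N x $ (k - i))"
    unfolding d fps_mult_left_const_nth by (simp only: fps_mult_nth)
  also have "(\<Sum>i=0..k. (Q ^ m) $ i * Wd N x $ (k - i)) = (\<Sum>j\<in>{1..Suc k}. shift_ps N j x * (Q ^ m) $ (Suc k - j))"
  proof (rule sum.reindex_bij_witness[where i="\<lambda>j. Suc k - j" and j="\<lambda>i. Suc k - i"])
    fix a assume a: "a \<in> {0..k}"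
    then show "Suc k - (Suc k - a) = a" "Suc k - a \<in> {1..Suc k}" by auto
    have e: "Suc k - (Suc k - a) = a" "Suc (k - a) = Suc k - a" using a by auto
    show "shift_ps N (Suc k - a) x * (Q ^ m) $ (Suc k - (Suc k - a)) = (Q ^ m) $ a * Wd N x $ (k - a)"
      unfolding e(1) by (simp add: Wd_def e(2))
  next
    fix b assume "b \<in> {1..Suc k}"
    then show "Suc k - (Suc k - b) = b" "Suc k - b \<in> {0..k}" by auto
  qed
  finally show ?thesis unfolding Q_def .
qed


definition Rr :: "real fps" where
  "Rr = fps_radical (\<lambda>k a. 1) 2 (1 + fps_X^2)"

definition Uu :: "real fps" where
  "Uu = fps_X + Rr"

lemma Rr_sq: "Rr^2 = 1 + fps_X^2"
proof -
  have "((\<lambda>k a. 1::real) (Suc 1) ((1 + fps_X^2 :: real fps) $ 0)) ^ Suc 1 = (1 + fps_X^2 :: real fps) $ 0"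
    by simp
  then have "fps_radical (\<lambda>k a. 1) (Suc 1) (1 + fps_X^2 :: real fps) ^ Suc 1 = 1 + fps_X^2"
    using power_radical[of "1 + fps_X^2 :: real fps" "\<lambda>k a. 1" 1] by simp
  then show ?thesis by (simp add: Rr_def numeral_2_eq_2)
qed

lemma Rr_0: "Rr $ 0 = 1"
  by (simp add: Rr_def)

lemma Uu_0: "Uu $ 0 = 1"
  by (simp add: Uu_def Rr_0)

lemma Rr_deriv: "Rr * fps_deriv Rr = fps_X"
proof -
  have "fps_deriv (Rr^2) = fps_deriv (1 + fps_X^2 :: real fps)" by (simp add: Rr_sq)
  then have "fps_const 2 * (Rr * fps_deriv Rr) = fps_const 2 * fps_X"
    by (simp add: power2_eq_square algebra_simps fps_const_add[symmetric] mult_2)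
  then show ?thesis by (metis fps_const_eq_0_iff mult_cancel_left zero_neq_numeral)
qed

lemma Uu_deriv: "Rr * fps_deriv Uu = Uu"
  by (simp add: Uu_def distrib_left Rr_deriv add.commute)

lemma Uu_sq: "Uu^2 - 2 * fps_X * Uu - 1 = 0"
  by (simp add: Uu_def power2_eq_square algebra_simps Rr_sq[unfolded power2_eq_square])

lemma y_deriv1:
  fixes m :: nat
  shows "Rr * fps_deriv (Uu ^ m) = fps_const (real m) * Uu ^ m"
proof (cases m)
  case 0 then show ?thesis by simp
next
  case (Suc m')
  have "fps_deriv (Uu ^ m) = fps_const (real m) * fps_deriv Uu * Uu ^ m'"
    unfolding Suc by (subst fps_deriv_power) simp
  then have "Rr * fps_deriv (Uu ^ m) = fps_const (real m) * (Rr * fps_deriv Uu) * Uu ^ m'"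
    by (simp add: algebra_simps)
  also have "\<dots> = fps_const (real m) * Uu ^ m" unfolding Uu_deriv using Suc by (simp add: algebra_simps)
  finally show ?thesis .
qed

lemma y_ode:
  fixes m :: nat
  defines "y \<equiv> Uu ^ m"
  shows "fps_X * fps_deriv y + (1 + fps_X^2) * fps_deriv (fps_deriv y) = fps_const (real m ^ 2) * y"
proof -
  have d1: "Rr * fps_deriv y = fps_const (real m) * y" unfolding y_def by (rule y_deriv1)
  have "fps_deriv (Rr * fps_deriv y) = fps_deriv (fps_const (real m) * y)" using d1 by simp
  then have d2: "fps_deriv Rr * fps_deriv y + Rr * fps_deriv (fps_deriv y) = fps_const (real m) * fps_deriv y"
    by (simp add: algebra_simps)
  have "Rr * (fps_deriv Rr * fps_deriv y + Rr * fps_deriv (fps_deriv y)) = Rr * (fps_const (real m) * fps_deriv y)"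
    using d2 by simp
  then have "(Rr * fps_deriv Rr) * fps_deriv y + Rr^2 * fps_deriv (fps_deriv y) = fps_const (real m) * (Rr * fps_deriv y)"
    by (simp add: algebra_simps power2_eq_square)
  then show ?thesis unfolding Rr_deriv Rr_sq d1
    by (simp add: algebra_simps power2_eq_square fps_const_mult)
qed

lemma y_rec:
  fixes m :: nat
  shows "real (Suc k) * real (Suc (Suc k)) * (Uu ^ m) $ (Suc (Suc k)) = (real m ^ 2 - real k ^ 2) * (Uu ^ m) $ k"
proof -
  define y where "y = Uu ^ m"
  have "(fps_X * fps_deriv y + (1 + fps_X^2) * fps_deriv (fps_deriv y)) $ k = (fps_const (real m ^ 2) * y) $ k"
    using y_ode[of m] by (simp add: y_def)
  moreover have "(fps_X * fps_deriv y) $ k = real k * y $ k" by (cases k) simp_all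
  moreover have "((1 + fps_X^2) * fps_deriv (fps_deriv y)) $ k =
      real (Suc k) * real (Suc (Suc k)) * y $ (Suc (Suc k)) + real k * (real k - 1) * y $ k"
  proof -
    have "((1 + fps_X^2) * fps_deriv (fps_deriv y)) $ k = fps_deriv (fps_deriv y) $ k + (fps_X^2 * fps_deriv (fps_deriv y)) $ k"
      by (simp add: distrib_right)
    moreover have "(fps_X^2 * fps_deriv (fps_deriv y)) $ k = real k * (real k - 1) * y $ k"
    proof (cases "k < 2")
      case True then show ?thesis by (auto simp: fps_X_power_mult_nth less_2_cases_iff)
    next
      case False
      then obtain j where j: "k = Suc (Suc j)" by (metis add_2_eq_Suc le_add_diff_inverse not_less)
      have "(fps_X^2 * fps_deriv (fps_deriv y)) $ k = fps_deriv (fps_deriv y) $ j" using j by (simp add: fps_X_power_mult_nth)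
      also have "\<dots> = real k * (real k - 1) * y $ k" using j by (simp add: algebra_simps)
      finally show ?thesis .
    qed
    ultimately show ?thesis by (simp add: algebra_simps)
  qed
  ultimately have "real k * y $ k + (real (Suc k) * real (Suc (Suc k)) * y $ (Suc (Suc k)) + real k * (real k - 1) * y $ k)
      = real m ^ 2 * y $ k" by simp
  then show ?thesis unfolding y_def[symmetric] by (simp add: algebra_simps power2_eq_square)
qed

lemma y_0: "(Uu ^ m) $ 0 = 1"
proof (induction m)
  case 0 show ?case by simp
next
  case (Suc m)
  have "(Uu ^ Suc m) $ 0 = Uu $ 0 * (Uu ^ m) $ 0" by (simp add: fps_mult_nth)
  then show ?case using Suc Uu_0 by simp
qed

lemma y_1: "(Uu ^ m) $ 1 = real m"
proof -
  have "(Rr * fps_deriv (Uu ^ m)) $ 0 = (fps_const (real m) * Uu ^ m) $ 0" by (simp add: y_deriv1)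
  then show ?thesis by (simp add: Rr_0 y_0)
qed

definition bcoef :: "nat \<Rightarrow> nat \<Rightarrow> real" where
  "bcoef M l = real M / fact l * (\<Prod>j<l - 1. real M + real l - 2 - 2 * real j)"

lemma bcoef_rec:
  assumes "l \<ge> 1"
  shows "real (Suc l) * real (Suc (Suc l)) * bcoef M (Suc (Suc l)) = (real M ^ 2 - real l ^ 2) * bcoef M l"
proof -
  define g where "g = (\<lambda>j. real M + real l - 2 - 2 * real j)"
  define P where "P = (\<Prod>j<l - 1. g j)"
  obtain l' where l': "l = Suc l'" using assms by (cases l) auto
  have p1: "(\<Prod>j<Suc (Suc l) - 1. real M + real (Suc (Suc l)) - 2 - 2 * real j) = (real M + real l) * (\<Prod>j<l. g j)"
  proof -
    have "(\<Prod>j<Suc (Suc l) - 1. real M + real (Suc (Suc l)) - 2 - 2 * real j) = (\<Prod>j<Suc l. real M + real l - 2 * real j)"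
      by (rule prod.cong) auto
    also have "\<dots> = (real M + real l) * (\<Prod>j<l. real M + real l - 2 * real (Suc j))"
      by (subst prod.lessThan_Suc_shift) simp
    also have "(\<Prod>j<l. real M + real l - 2 * real (Suc j)) = (\<Prod>j<l. g j)"
      by (rule prod.cong) (auto simp: g_def)
    finally show ?thesis .
  qed
  have p2: "(\<Prod>j<l. g j) = P * (real M - real l)"
  proof -
    have "(\<Prod>j<l. g j) = (\<Prod>j<l'. g j) * g l'" using l' by simp
    moreover have "g l' = real M - real l" using l' by (simp add: g_def)
    moreover have "P = (\<Prod>j<l'. g j)" using l' by (simp add: P_def)
    ultimately show ?thesis by simp
  qed
  have b1: "bcoef M (Suc (Suc l)) = real M / fact (Suc (Suc l)) * ((real M + real l) * (P * (real M - real l)))"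
    unfolding bcoef_def p1 p2 by simp
  have f: "(fact (Suc (Suc l)) :: real) = real (Suc l) * real (Suc (Suc l)) * fact l"
    by (simp add: algebra_simps)
  have b2: "bcoef M l = real M / fact l * P" unfolding bcoef_def P_def g_def by simp
  define Z where "Z = (real M + real l) * (P * (real M - real l))"
  define a where "a = real (Suc l) * real (Suc (Suc l))"
  have a0: "a \<noteq> 0" unfolding a_def by simp
  have fl: "(fact l :: real) \<noteq> 0" by simp
  have "a * bcoef M (Suc (Suc l)) = a * (real M / (a * fact l) * Z)"
    unfolding b1 f Z_def[symmetric] a_def by simp
  also have "\<dots> = real M / fact l * Z" using a0 fl by (simp add: field_simps)
  finally have "real (Suc l) * real (Suc (Suc l)) * bcoef M (Suc (Suc l)) = real M / fact l * Z"
    unfolding a_def .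
  also have "\<dots> = (real M ^ 2 - real l ^ 2) * bcoef M l"
    unfolding b2 Z_def by (simp add: algebra_simps power2_eq_square)
  finally show ?thesis .
qed

lemma y_coef: "l \<ge> 1 \<Longrightarrow> (Uu ^ M) $ l = bcoef M l"
proof (induction l rule: less_induct)
  case (less l)
  show ?case
  proof (cases "l = 1")
    case True then show ?thesis using y_1[of M] by (simp add: bcoef_def)
  next
    case False
    show ?thesis
    proof (cases "l = 2")
      case True
      have "real (Suc 0) * real (Suc (Suc 0)) * (Uu ^ M) $ 2 = real M ^ 2"
        using y_rec[of 0 M] y_0 by (simp add: numeral_2_eq_2)
      then show ?thesis using True by (simp add: bcoef_def power2_eq_square)
    next
      case False2: False
      define k where "k = l - 2"
      have k: "l = Suc (Suc k)" "k \<ge> 1" using False False2 less.prems unfolding k_def by arith+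
      have ih: "(Uu ^ M) $ k = bcoef M k" using less.IH k by simp
      have "real (Suc k) * real (Suc (Suc k)) * (Uu ^ M) $ l = real (Suc k) * real (Suc (Suc k)) * bcoef M l"
        using y_rec[of k M] bcoef_rec[OF k(2), of M] ih k(1) by simp
      then show ?thesis by simp
    qed
  qed
qed


lemma lin_refl: "(1 + fps_const d * fps_X :: real fps) oo (- fps_X) = 1 + fps_const (- d) * fps_X"
proof -
  have "(1 + fps_const d * fps_X :: real fps) oo (- fps_X) = Abs_fps (\<lambda>n. (-1)^n * (1 + fps_const d * fps_X :: real fps) $ n)"
    by (rule fps_compose_uminus')
  also have "\<dots> = 1 + fps_const (- d) * fps_X"
  proof (rule fps_ext)
    fix n show "Abs_fps (\<lambda>n. (-1)^n * (1 + fps_const d * fps_X :: real fps) $ n) $ n = (1 + fps_const (- d) * fps_X) $ n"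
      by (cases n) auto
  qed
  finally show ?thesis .
qed

lemma fc_alt: "fc c = (1 + fps_const c * fps_X) * inverse (1 + fps_const (- c) * fps_X)"
proof -
  have "1 + fps_const (- c) * fps_X = (1 - fps_const c * fps_X :: real fps)"
    by (metis diff_conv_add_uminus fps_const_neg mult_minus_left)
  then show ?thesis unfolding fc_def by simp
qed

lemma fc_refl: "fc c * (fc c oo (- fps_X)) = 1"
proof -
  have X0: "(- fps_X :: real fps) $ 0 = 0" by simp
  have "fc c oo (- fps_X) = ((1 + fps_const c * fps_X) oo (- fps_X)) * (inverse (1 + fps_const (- c) * fps_X) oo (- fps_X))"
    unfolding fc_alt by (rule fps_compose_mult_distrib[OF X0])
  also have "inverse (1 + fps_const (- c) * fps_X :: real fps) oo (- fps_X) = inverse ((1 + fps_const (- c) * fps_X) oo (- fps_X))"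
    by (rule fps_inverse_compose[OF X0]) simp
  finally have e: "fc c oo (- fps_X) = (1 + fps_const (- c) * fps_X) * inverse (1 + fps_const c * fps_X)"
    by (simp add: lin_refl)
  define A where "A = (1 + fps_const c * fps_X :: real fps)"
  define B where "B = (1 + fps_const (- c) * fps_X :: real fps)"
  have A1: "A * inverse A = 1" unfolding A_def by (rule inverse_mult_eq_1') simp
  have B1: "B * inverse B = 1" unfolding B_def by (rule inverse_mult_eq_1') simp
  have "fc c * (fc c oo (- fps_X)) = (A * inverse A) * (B * inverse B)"
    unfolding e unfolding fc_alt A_def[symmetric] B_def[symmetric] by (simp add: algebra_simps)
  then show ?thesis using A1 B1 by simp
qed

lemma Q_refl: "schurP_gf N x * (schurP_gf N x oo (- fps_X)) = 1"
proof (induction N)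
  case 0 then show ?case by (simp add: schurP_gf_def)
next
  case (Suc N)
  have X0: "(- fps_X :: real fps) $ 0 = 0" by simp
  have "schurP_gf (Suc N) x * (schurP_gf (Suc N) x oo (- fps_X)) =
      (schurP_gf N x * (schurP_gf N x oo (- fps_X))) * (fc (x N) * (fc (x N) oo (- fps_X)))"
    unfolding schurP_gf_Suc fps_compose_mult_distrib[OF X0] by (simp add: algebra_simps)
  then show ?case using Suc fc_refl by simp
qed

definition Sx :: "nat \<Rightarrow> (nat \<Rightarrow> real) \<Rightarrow> real fps" where
  "Sx N x = Abs_fps (\<lambda>k. if odd k then schurP_gf N x $ k else 0)"

lemma Sx_0: "Sx N x $ 0 = 0" by (simp add: Sx_def)

lemma Sx_rel: "Sx N x + Sx N x = schurP_gf N x - (schurP_gf N x oo (- fps_X))"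
proof (rule fps_ext)
  fix k
  show "(Sx N x + Sx N x) $ k = (schurP_gf N x - (schurP_gf N x oo (- fps_X))) $ k"
  proof -
    have sk: "Sx N x $ k = (if odd k then schurP_gf N x $ k else 0)" by (simp add: Sx_def)
    have r: "(schurP_gf N x oo (- fps_X)) $ k = (-1)^k * schurP_gf N x $ k"
      unfolding fps_compose_uminus' by simp
    show ?thesis unfolding fps_add_nth fps_sub_nth r sk by (cases "even k") simp_all
  qed
qed

lemma Q_eq: "schurP_gf N x ^ 2 = Sx N x * schurP_gf N x + Sx N x * schurP_gf N x + 1"
proof -
  define Q where "Q = schurP_gf N x"
  have "Sx N x * Q + Sx N x * Q = (Sx N x + Sx N x) * Q" by (simp add: algebra_simps)
  also have "\<dots> = Q * Q - Q * (Q oo (- fps_X))" unfolding Sx_rel Q_def by (simp add: algebra_simps)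
  also have "Q * (Q oo (- fps_X)) = 1" unfolding Q_def by (rule Q_refl)
  finally show ?thesis unfolding Q_def[symmetric] by (simp add: power2_eq_square)
qed

lemma Uu_eq: "Uu ^ 2 = fps_X * Uu + fps_X * Uu + 1"
  using Uu_sq by (simp add: algebra_simps)

lemma V_eq: "(Uu oo Sx N x) ^ 2 = Sx N x * (Uu oo Sx N x) + Sx N x * (Uu oo Sx N x) + 1"
proof -
  have S0: "Sx N x $ 0 = 0" by (rule Sx_0)
  have "(Uu oo Sx N x) ^ 2 = Uu ^ 2 oo Sx N x" by (rule fps_compose_power[OF S0])
  also have "\<dots> = (fps_X * Uu + fps_X * Uu + 1) oo Sx N x" by (simp add: Uu_eq)
  also have "\<dots> = Sx N x * (Uu oo Sx N x) + Sx N x * (Uu oo Sx N x) + 1"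
    by (simp only: fps_compose_add_distrib fps_compose_mult_distrib[OF S0] fps_X_fps_compose_startby0[OF S0] fps_compose_1)
  finally show ?thesis .
qed

lemma root_unique:
  fixes A B S :: "real fps"
  assumes A: "A ^ 2 = S * A + S * A + 1" and B: "B ^ 2 = S * B + S * B + 1"
    and A0: "A $ 0 = 1" and B0: "B $ 0 = 1" and S0: "S $ 0 = 0"
  shows "A = B"
proof -
  have "(A - B) * (A + B - S - S) = A ^ 2 - B ^ 2 - (S * A + S * A) + (S * B + S * B)"
    by (simp add: algebra_simps power2_eq_square)
  also have "\<dots> = 0" unfolding A B by simp
  finally have z: "(A - B) * (A + B - S - S) = 0" .
  have "(A + B - S - S) $ 0 = 2" using A0 B0 S0 by simp
  then have "A + B - S - S \<noteq> 0" by (metis fps_zero_nth zero_neq_numeral)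
  then show ?thesis using z by simp
qed

lemma Q_comp: "schurP_gf N x = Uu oo Sx N x"
  by (rule root_unique[OF Q_eq V_eq Q_0 _ Sx_0]) (simp add: Uu_0)

lemma Qpow_nth: "(schurP_gf N x ^ M) $ n = (\<Sum>i=0..n. (Uu ^ M) $ i * (Sx N x ^ i) $ n)"
proof -
  have "schurP_gf N x ^ M = Uu ^ M oo Sx N x"
    unfolding Q_comp by (rule fps_compose_power[OF Sx_0])
  then show ?thesis by (simp only: fps_compose_nth)
qed


lemma pow_nth0: "(A ^ m) $ 0 = (A $ 0 :: real) ^ m"
proof (induction m)
  case 0 show ?case by simp
next
  case (Suc m)
  have "(A ^ Suc m) $ 0 = A $ 0 * (A ^ m) $ 0" by (simp add: fps_mult_nth)
  then show ?case using Suc by simp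
qed

lemma SH_eq:
  assumes n: "n \<ge> 1"
  shows "SH n N x = (schurP_gf N x ^ Suc n) $ n / real (Suc n)"
proof -
  define u where "u k = real (Suc n) * shift_ps N k x" for k
  define e where "e k = (schurP_gf N x ^ Suc n) $ k" for k
  have e0: "e 0 = 1" unfolding e_def by (simp add: pow_nth0 Q_0)
  have rec: "real (Suc m) * e (Suc m) = (\<Sum>j\<in>{1..Suc m}. u j * e (Suc m - j))" for m
  proof -
    have "real (Suc m) * e (Suc m) = real (Suc n) * (\<Sum>j\<in>{1..Suc m}. shift_ps N j x * e (Suc m - j))"
      unfolding e_def by (rule Qpow_rec)
    also have "\<dots> = (\<Sum>j\<in>{1..Suc m}. u j * e (Suc m - j))"
      by (simp only: u_def sum_distrib_left mult.assoc)
    finally show ?thesis .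
  qed
  have F: "Fp (\<lambda>c. u (card c)) {..<n} = fact n * e n"
    using Fp_formula[of e u, OF e0 rec, of "{..<n}"] by simp
  have trm: "real (card (fixed_pfs n \<sigma>)) * (\<Prod>c\<in>cycles_of n \<sigma>. shift_ps N (card c) x) =
      (\<Prod>c\<in>orbit \<sigma> ` {..<n}. u (card c)) / real (Suc n)" if \<sigma>: "\<sigma> permutes {..<n}" for \<sigma>
  proof -
    define C where "C = cycles_of n \<sigma>"
    have c1: "card C \<ge> 1"
    proof -
      have "orbit \<sigma> 0 \<in> C" using n by (auto simp: C_def cycles_of_def)
      moreover have "finite C" by (simp add: C_def cycles_of_def)
      ultimately show ?thesis by (metis One_nat_def Suc_leI card_gt_0_iff empty_iff)
    qed
    have "(\<Prod>c\<in>C. u (card c)) = real (Suc n) ^ card C * (\<Prod>c\<in>C. shift_ps N (card c) x)"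
      by (simp add: u_def prod.distrib)
    also have "real (Suc n) ^ card C = real (Suc n) ^ (card C - 1) * real (Suc n)"
      using c1 by (metis Suc_diff_le diff_Suc_1 power_Suc2)
    finally have "(\<Prod>c\<in>C. u (card c)) / real (Suc n) = real (Suc n) ^ (card C - 1) * (\<Prod>c\<in>C. shift_ps N (card c) x)"
      by simp
    moreover have "real (card (fixed_pfs n \<sigma>)) = real (Suc n) ^ (card C - 1)"
      using pollak[OF \<sigma> n] by (simp add: C_def)
    ultimately show ?thesis by (simp add: C_def cycles_of_def)
  qed
  have "SH n N x = 1 / fact n * (\<Sum>\<sigma> | \<sigma> permutes {..<n}. (\<Prod>c\<in>orbit \<sigma> ` {..<n}. u (card c)) / real (Suc n))"
    unfolding SH_def by (rule arg_cong[where f="\<lambda>t. 1 / fact n * t"], rule sum.cong) (auto simp: trm)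
  also have "\<dots> = 1 / fact n * (Fp (\<lambda>c. u (card c)) {..<n} / real (Suc n))"
    unfolding Fp_def by (simp add: sum_divide_distrib)
  also have "\<dots> = e n / real (Suc n)" unfolding F by simp
  finally show ?thesis unfolding e_def .
qed

definition Lo :: "nat \<Rightarrow> nat list set" where
  "Lo n = {xs. (\<forall>k\<in>set xs. odd k) \<and> sum_list xs = n}"

lemma len_le_sum: "(\<forall>k\<in>set xs. 1 \<le> k) \<Longrightarrow> length xs \<le> sum_list (xs :: nat list)"
  by (induction xs) auto

lemma Lo_props:
  assumes "xs \<in> Lo n" "n \<ge> 1"
  shows "1 \<le> length xs" "length xs \<le> n" "set xs \<subseteq> {0..n}"
proof -
  have o: "\<forall>k\<in>set xs. odd k" and s: "sum_list xs = n" using assms by (auto simp: Lo_def)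
  have "\<forall>k\<in>set xs. 1 \<le> k" using o by (metis One_nat_def Suc_leI odd_pos)
  then show "length xs \<le> n" using len_le_sum s by metis
  show "1 \<le> length xs" using s assms(2) by (cases xs) auto
  show "set xs \<subseteq> {0..n}" using member_le_sum_list s by fastforce
qed

lemma finite_Lo: "n \<ge> 1 \<Longrightarrow> finite (Lo n)"
proof -
  assume n: "n \<ge> 1"
  have "Lo n \<subseteq> {xs. set xs \<subseteq> {0..n} \<and> length xs \<le> n}" using Lo_props[OF _ n] by blast
  moreover have "finite {xs. set xs \<subseteq> {0..n} \<and> length xs \<le> n}" by (rule finite_lists_length_le) simp
  ultimately show ?thesis by (rule finite_subset)
qed

lemma Sx_pow:
  assumes i: "i \<ge> 1"
  shows "(Sx N x ^ i) $ n = (\<Sum>v\<in>{v \<in> Lo n. length v = i}. \<Prod>j<i. schurP_gf N x $ (v ! j))"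
proof -
  obtain m where m: "i = Suc m" using i by (cases i) auto
  define Q where "Q = schurP_gf N x"
  have pv: "(\<Prod>j\<in>{0..m}. Sx N x $ (v ! j)) = (if \<forall>k\<in>set v. odd k then \<Prod>j<i. Q $ (v ! j) else 0)"
    if v: "v \<in> natpermute n i" for v
  proof -
    have lv: "length v = i" using v by (simp add: natpermute_def)
    have iv: "{0..m} = {..<i}" using m by auto
    show ?thesis
    proof (cases "\<forall>k\<in>set v. odd k")
      case True
      have "(\<Prod>j\<in>{0..m}. Sx N x $ (v ! j)) = (\<Prod>j<i. Q $ (v ! j))"
        unfolding iv
      proof (rule prod.cong[OF refl])
        fix j assume "j \<in> {..<i}"
        then have "v ! j \<in> set v" using lv by simp
        then have "odd (v ! j)" using True by blast
        then show "Sx N x $ (v ! j) = Q $ (v ! j)" by (simp add: Sx_def Q_def)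
      qed
      then show ?thesis using True by simp
    next
      case False
      then obtain k where k: "k \<in> set v" "even k" by blast
      then obtain j where j: "j < i" "v ! j = k" using lv by (metis in_set_conv_nth)
      have "Sx N x $ (v ! j) = 0" using j k by (simp add: Sx_def)
      moreover have "j \<in> {0..m}" using j m by auto
      ultimately have "(\<Prod>j\<in>{0..m}. Sx N x $ (v ! j)) = 0" by (intro prod_zero) auto
      then show ?thesis by (simp only: if_not_P[OF False])
    qed
  qed
  have "(Sx N x ^ i) $ n = (\<Sum>v\<in>natpermute n (m + 1). \<Prod>j\<in>{0..m}. Sx N x $ (v ! j))"
    unfolding m by (rule fps_power_nth_Suc)
  also have "\<dots> = (\<Sum>v\<in>natpermute n i. if \<forall>k\<in>set v. odd k then \<Prod>j<i. Q $ (v ! j) else 0)"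
    using m pv by (intro sum.cong) auto
  also have "\<dots> = (\<Sum>v\<in>{v \<in> natpermute n i. \<forall>k\<in>set v. odd k}. \<Prod>j<i. Q $ (v ! j))"
    by (simp add: sum.inter_filter natpermute_finite)
  also have "{v \<in> natpermute n i. \<forall>k\<in>set v. odd k} = {v \<in> Lo n. length v = i}"
    by (auto simp: natpermute_def Lo_def)
  finally show ?thesis unfolding Q_def .
qed

lemma LHS_sum:
  assumes n: "n \<ge> 1"
  shows "(schurP_gf N x ^ Suc n) $ n / real (Suc n) =
    (\<Sum>xs\<in>Lo n. bcoef (Suc n) (length xs) / real (Suc n) * (\<Prod>j<length xs. schurP_gf N x $ (xs ! j)))"
proof -
  define Q where "Q = schurP_gf N x"
  define P where "P v = (\<Prod>j<length v. Q $ (v ! j))" for v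
  have "(Q ^ Suc n) $ n = (\<Sum>i=0..n. (Uu ^ Suc n) $ i * (Sx N x ^ i) $ n)"
    unfolding Q_def by (rule Qpow_nth)
  also have "\<dots> = (Uu ^ Suc n) $ 0 * (Sx N x ^ 0) $ n + (\<Sum>i=Suc 0..n. (Uu ^ Suc n) $ i * (Sx N x ^ i) $ n)"
    by (rule sum.atLeast_Suc_atMost) simp
  also have "(Sx N x ^ 0) $ n = 0" using n by simp
  also have "(\<Sum>i=Suc 0..n. (Uu ^ Suc n) $ i * (Sx N x ^ i) $ n) =
      (\<Sum>i\<in>{Suc 0..n}. \<Sum>v\<in>{v \<in> Lo n. length v = i}. bcoef (Suc n) (length v) * P v)"
  proof (rule sum.cong[OF refl])
    fix i assume i: "i \<in> {Suc 0..n}"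
    then have "(Uu ^ Suc n) $ i = bcoef (Suc n) i" by (intro y_coef) auto
    moreover have "(Sx N x ^ i) $ n = (\<Sum>v\<in>{v \<in> Lo n. length v = i}. P v)"
      using Sx_pow[of i N x n] i by (auto simp: P_def Q_def intro!: sum.cong)
    ultimately show "(Uu ^ Suc n) $ i * (Sx N x ^ i) $ n = (\<Sum>v\<in>{v \<in> Lo n. length v = i}. bcoef (Suc n) (length v) * P v)"
      by (simp add: sum_distrib_left)
  qed
  also have "(\<Sum>i\<in>{Suc 0..n}. \<Sum>v\<in>{v \<in> Lo n. length v = i}. bcoef (Suc n) (length v) * P v) =
      (\<Sum>v\<in>Lo n. bcoef (Suc n) (length v) * P v)"
    by (rule sum.group[OF finite_Lo[OF n]]) (use Lo_props[OF _ n] in auto)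
  finally have "(Q ^ Suc n) $ n = (\<Sum>v\<in>Lo n. bcoef (Suc n) (length v) * P v)" by simp
  then show ?thesis unfolding Q_def[symmetric] P_def by (simp add: sum_divide_distrib mult_ac)
qed

lemma prod_list_map_nth: "prod_list (map f xs) = (\<Prod>j<length xs. f (xs ! j))"
  by (induction xs) (simp_all add: prod.lessThan_Suc_shift del: prod.lessThan_Suc)

lemma V_mset: "V (mset xs) N x = (\<Prod>j<length xs. schurP_gf N x $ (xs ! j)) / 2 ^ length xs"
proof -
  have "V (mset xs) N x = prod_list (map (\<lambda>k. schurP k N x) xs)"
    unfolding V_def by (simp add: prod_mset_prod_list flip: mset_map)
  also have "\<dots> = (\<Prod>j<length xs. schurP_gf N x $ (xs ! j) / 2)"
    unfolding prod_list_map_nth schurP_def ..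
  also have "\<dots> = (\<Prod>j<length xs. schurP_gf N x $ (xs ! j)) / 2 ^ length xs"
    by (simp add: prod_dividef)
  finally show ?thesis .
qed

lemma summand_eq:
  assumes "length xs \<ge> 1"
  shows "bcoef (Suc n) (length xs) / real (Suc n) * (\<Prod>j<length xs. schurP_gf N x $ (xs ! j)) =
    2 ^ length xs / fact (length xs) * (\<Prod>j<length xs - 1. real n + real (length xs) - 1 - 2 * real j) * V (mset xs) N x"
proof -
  define l where "l = length xs"
  define PQ where "PQ = (\<Prod>j<l. schurP_gf N x $ (xs ! j))"
  define PP where "PP = (\<Prod>j<l - 1. real n + real l - 1 - 2 * real j)"
  have b: "bcoef (Suc n) l / real (Suc n) = PP / fact l"
  proof -
    have "(\<Prod>j<l - 1. real (Suc n) + real l - 2 - 2 * real j) = PP"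
      unfolding PP_def by (rule prod.cong) auto
    then show ?thesis unfolding bcoef_def by simp
  qed
  have v: "V (mset xs) N x = PQ / 2 ^ l" unfolding PQ_def l_def by (rule V_mset)
  have l1: "l \<ge> 1" using assms l_def by simp
  show ?thesis unfolding l_def[symmetric] PQ_def[symmetric] PP_def[symmetric] b v by simp
qed

lemma RHS_sum:
  assumes n: "n \<ge> 1"
  shows "(\<Sum>mu\<in>odd_partitions n.
       (2 ^ size mu / fact (size mu)) *
       (fact (size mu) / (\<Prod>i\<in>set_mset mu. fact (count mu i))) *
       (\<Prod>j<size mu - 1. real n + real (size mu) - 1 - 2 * real j) *
       V mu N x) =
    (\<Sum>xs\<in>Lo n. 2 ^ length xs / fact (length xs) * (\<Prod>j<length xs - 1. real n + real (length xs) - 1 - 2 * real j) * V (mset xs) N x)"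
proof -
  define h0 where "h0 mu = 2 ^ size mu / fact (size mu) * (\<Prod>j<size mu - 1. real n + real (size mu) - 1 - 2 * real j) * V mu N x" for mu :: "nat multiset"
  have img: "mset ` Lo n = odd_partitions n"
  proof (intro equalityI subsetI)
    fix mu assume "mu \<in> mset ` Lo n"
    then obtain xs where xs: "xs \<in> Lo n" "mu = mset xs" by auto
    then show "mu \<in> odd_partitions n" using sum_mset_sum_list[of xs] by (simp add: Lo_def odd_partitions_def)
  next
    fix mu assume mu: "mu \<in> odd_partitions n"
    obtain xs where xs: "mset xs = mu" using ex_mset by blast
    have "\<forall>k\<in>#mu. odd k" using mu by (simp add: odd_partitions_def)
    then have "\<forall>k\<in>set xs. odd k" using xs by (metis set_mset_mset)
    moreover have "sum_list xs = n" using mu xs sum_mset_sum_list[of xs] by (simp add: odd_partitions_def)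
    ultimately have "xs \<in> Lo n" by (simp add: Lo_def)
    then show "mu \<in> mset ` Lo n" using xs by blast
  qed
  have finP: "finite (odd_partitions n)" unfolding img[symmetric] using finite_Lo[OF n] by (rule finite_imageI)
  have "(\<Sum>xs\<in>Lo n. h0 (mset xs)) = (\<Sum>mu\<in>odd_partitions n. \<Sum>xs\<in>{xs \<in> Lo n. mset xs = mu}. h0 (mset xs))"
    by (rule sum.group[OF finite_Lo[OF n] finP, symmetric]) (simp add: img)
  also have "\<dots> = (\<Sum>mu\<in>odd_partitions n.
       (2 ^ size mu / fact (size mu)) *
       (fact (size mu) / (\<Prod>i\<in>set_mset mu. fact (count mu i))) *
       (\<Prod>j<size mu - 1. real n + real (size mu) - 1 - 2 * real j) *
       V mu N x)"
  proof (rule sum.cong[OF refl])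
    fix mu assume mu: "mu \<in> odd_partitions n"
    have fib: "{xs \<in> Lo n. mset xs = mu} = permutations_of_multiset mu"
    proof (intro equalityI subsetI)
      fix xs assume "xs \<in> {xs \<in> Lo n. mset xs = mu}"
      then show "xs \<in> permutations_of_multiset mu" by (auto intro: permutations_of_multisetI)
    next
      fix xs assume "xs \<in> permutations_of_multiset mu"
      then have xs: "mset xs = mu" by (rule permutations_of_multisetD)
      have "\<forall>k\<in>#mu. odd k" using mu by (simp add: odd_partitions_def)
    then have "\<forall>k\<in>set xs. odd k" using xs by (metis set_mset_mset)
      moreover have "sum_list xs = n" using mu xs sum_mset_sum_list[of xs] by (simp add: odd_partitions_def)
      ultimately show "xs \<in> {xs \<in> Lo n. mset xs = mu}" using xs by (simp add: Lo_def)
    qed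
    have "(\<Sum>xs\<in>{xs \<in> Lo n. mset xs = mu}. h0 (mset xs)) = (\<Sum>xs\<in>permutations_of_multiset mu. h0 mu)"
      unfolding fib by (rule sum.cong[OF refl]) (simp add: permutations_of_multisetD)
    also have "\<dots> = real (card (permutations_of_multiset mu)) * h0 mu" by simp
    also have "real (card (permutations_of_multiset mu)) = fact (size mu) / (\<Prod>i\<in>set_mset mu. fact (count mu i))"
    proof -
      have "real (card (permutations_of_multiset mu)) =
          real (fact (size mu) div (\<Prod>i\<in>set_mset mu. fact (count mu i)))"
        by (simp add: card_permutations_of_multiset(1))
      also have "\<dots> = real (fact (size mu)) / real (\<Prod>i\<in>set_mset mu. fact (count mu i))"
        by (rule real_of_nat_div[OF card_permutations_of_multiset(2)])
      finally show ?thesis by (simp add: of_nat_prod)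
    qed
    finally show "(\<Sum>xs\<in>{xs \<in> Lo n. mset xs = mu}. h0 (mset xs)) =
       (2 ^ size mu / fact (size mu)) *
       (fact (size mu) / (\<Prod>i\<in>set_mset mu. fact (count mu i))) *
       (\<Prod>j<size mu - 1. real n + real (size mu) - 1 - 2 * real j) *
       V mu N x" unfolding h0_def by (simp only: mult.assoc mult.commute mult.left_commute)
  qed
  finally have calc: "(\<Sum>xs\<in>Lo n. h0 (mset xs)) = (\<Sum>mu\<in>odd_partitions n.
       (2 ^ size mu / fact (size mu)) *
       (fact (size mu) / (\<Prod>i\<in>set_mset mu. fact (count mu i))) *
       (\<Prod>j<size mu - 1. real n + real (size mu) - 1 - 2 * real j) *
       V mu N x)" .
  have e2: "(\<Sum>xs\<in>Lo n. h0 (mset xs)) = (\<Sum>xs\<in>Lo n. 2 ^ length xs / fact (length xs) * (\<Prod>j<length xs - 1. real n + real (length xs) - 1 - 2 * real j) * V (mset xs) N x)"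
    unfolding h0_def by (rule sum.cong[OF refl]) (simp only: size_mset)
  show ?thesis by (rule trans[OF sym[OF calc] e2])
qed

theorem theorem3p4:
  fixes n N :: nat and x :: "nat \<Rightarrow> real"
  assumes "n \<ge> 1"
  shows "SH n N x =
    (\<Sum>mu\<in>odd_partitions n.
       (2 ^ size mu / fact (size mu)) *
       (fact (size mu) / (\<Prod>i\<in>set_mset mu. fact (count mu i))) *
       (\<Prod>j<size mu - 1. real n + real (size mu) - 1 - 2 * real j) *
       V mu N x)"
proof -
  have "SH n N x = (\<Sum>xs\<in>Lo n. bcoef (Suc n) (length xs) / real (Suc n) * (\<Prod>j<length xs. schurP_gf N x $ (xs ! j)))"
    unfolding SH_eq[OF assms] by (rule LHS_sum[OF assms])
  also have "\<dots> = (\<Sum>xs\<in>Lo n. 2 ^ length xs / fact (length xs) * (\<Prod>j<length xs - 1. real n + real (length xs) - 1 - 2 * real j) * V (mset xs) N x)"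
    by (rule sum.cong[OF refl]) (use Lo_props[OF _ assms] summand_eq in blast)
  also have "\<dots> = (\<Sum>mu\<in>odd_partitions n.
       (2 ^ size mu / fact (size mu)) *
       (fact (size mu) / (\<Prod>i\<in>set_mset mu. fact (count mu i))) *
       (\<Prod>j<size mu - 1. real n + real (size mu) - 1 - 2 * real j) *
       V mu N x)"
    by (rule RHS_sum[OF assms, symmetric])
  finally show ?thesis .
qed

end
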